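(* Let $T,d\ge1$, $\gamma>0$, $\beta>0$. For each task $t\in\{1,\dots,T\}$ let $(x_{t1},y_{t1}),\dots,(x_{tm_t},y_{tm_t})\in\mathbb{R}^d\times\mathbb{R}$ be independent samples drawn from a task-specific distribution, and write $X_t=[x_{t1},\dots,x_{tm_t}]$. Let $l$ be a loss with $0\le l(y,f(x))\le B$ for all arguments, which is $c$-admissible with respect to the class of linear functions. Let $(A,a_0,U)$, with $A=[a_1,\dots,a_T]\in\mathbb{R}^{d\times T}$, $a_0\in\mathbb{R}^d$ and $U\in\mathbb{R}^{d\times d}$ orthogonal, be an optimal solution of $$\min_{A,a_0,U}\ \sum_{t=1}^{T}\sum_{i=1}^{m_t} l\big(y_{ti},\langle a_t+a_0,U^Tx_{ti}\rangle\big)\quad\text{s.t.}\quad \|A\|_{2,1}^2\le \frac{T}{\gamma},\ \ \|a_0\|_2^2\le\frac1\beta,\ \ U^TU=I.$$ Then for any $\delta>0$, with probability at least $1-\delta$, $$E_x\sum_{t=1}^{T}\sum_{i=1}^{m_t}l\big(y_{ti},\langle a_t+a_0,U^Tx_{ti}\rangle\big)-\sum_{t=1}^{T}\sum_{i=1}^{m_t}l\big(y_{ti},\langle a_t+a_0,U^Tx_{ti}\rangle\big)\le 2c\left(\sqrt{\frac{T}{\gamma}}+\sqrt{\frac1\beta}\right)\sqrt{\sum_{t=1}^{T}m_tS(X_t)}+3B\sqrt{\frac{\sum_{t=1}^{T}m_t\ln(2/\delta)}{2}},$$ where $S(X_t)=\frac{1}{m_t}\sum_{i=1}^{m_t}\|x_{ti}\|_2^2$.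 Moreover, if $m_1=\dots=m_T=m$ and $\|x_t\|_2\le r$ for all $t$, then with probability at least $1-\delta$, $$\frac1T\sum_{t=1}^{T}E_x\,l\big(y_t,\langle a_t+a_0,U^Tx_t\rangle\big)-\frac1T\sum_{t=1}^{T}\frac1m\sum_{i=1}^{m}l\big(y_{ti},\langle a_t+a_0,U^Tx_{ti}\rangle\big)\le\frac{2cr}{\sqrt{\gamma m}}+\frac{2cr}{\sqrt{\beta mT}}+3B\sqrt{\frac{\ln(2/\delta)}{2mT}}.$$
   Context: For $A\in\mathbb{R}^{d\times T}$ with rows $a^1,\dots,a^d$, $\|A\|_{2,1}=\sum_{i=1}^d\|a^i\|_2$. A loss $l$ is $c$-admissible with respect to a hypothesis class $H$ if there is $c\ge0$ such that for all $h,h'\in H$ and all $(x,y)$, $|l(y,h(x))-l(y,h'(x))|\le c|h(x)-h'(x)|$. $E_x$ denotes expectation with respect to the data distribution (over fresh samples of each task); $(x_t,y_t)$ denotes a random sample from task $t$. *)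

theory Defs
  imports "HOL-Probability.Probability"
begin

text \<open>Row-wise (2,1)-norm of the d x T matrix A = [a_0,...,a_{T-1}] whose columns are a t.\<close>
definition norm21 :: "(nat \<Rightarrow> real^'d) \<Rightarrow> nat \<Rightarrow> real" where
  "norm21 a T = (\<Sum>j\<in>UNIV. sqrt (\<Sum>t<T. (a t $ j)^2))"

definition admissible :: "(real \<Rightarrow> real \<Rightarrow> real) \<Rightarrow> real \<Rightarrow> ('x \<Rightarrow> real) set \<Rightarrow> bool" where
  "admissible l c H \<longleftrightarrow> c \<ge> 0 \<and>
     (\<forall>h\<in>H. \<forall>h'\<in>H. \<forall>x y. \<bar>l y (h x) - l y (h' x)\<bar> \<le> c * \<bar>h x - h' x\<bar>)"

definition sample_idx :: "nat \<Rightarrow> (nat \<Rightarrow> nat) \<Rightarrow> (nat \<times> nat) set" where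
  "sample_idx T m = {(t,i). t < T \<and> i < m t}"

definition sample_measure ::
  "(nat \<Rightarrow> 'a measure) \<Rightarrow> nat \<Rightarrow> (nat \<Rightarrow> nat) \<Rightarrow> (nat \<times> nat \<Rightarrow> 'a) measure" where
  "sample_measure D T m = PiM (sample_idx T m) (\<lambda>ti. D (fst ti))"

definition pred :: "(nat \<Rightarrow> real^'d) \<Rightarrow> real^'d \<Rightarrow> real^'d^'d \<Rightarrow> nat \<Rightarrow> real^'d \<Rightarrow> real" where
  "pred a a0 U t x = (a t + a0) \<bullet> (transpose U *v x)"

definition emp_loss ::
  "(real \<Rightarrow> real \<Rightarrow> real) \<Rightarrow> nat \<Rightarrow> (nat \<Rightarrow> nat) \<Rightarrow> (nat \<times> nat \<Rightarrow> (real^'d) \<times> real)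
     \<Rightarrow> (nat \<Rightarrow> real^'d) \<Rightarrow> real^'d \<Rightarrow> real^'d^'d \<Rightarrow> real" where
  "emp_loss l T m z a a0 U =
     (\<Sum>t<T. \<Sum>i<m t. l (snd (z (t,i))) (pred a a0 U t (fst (z (t,i)))))"

definition feasible :: "nat \<Rightarrow> real \<Rightarrow> real \<Rightarrow> (nat \<Rightarrow> real^'d) \<Rightarrow> real^'d \<Rightarrow> real^'d^'d \<Rightarrow> bool" where
  "feasible T \<gamma> \<beta> a a0 U \<longleftrightarrow>
     (norm21 a T)^2 \<le> real T / \<gamma> \<and> (norm a0)^2 \<le> 1 / \<beta> \<and> transpose U ** U = mat 1"

definition optimal ::
  "(real \<Rightarrow> real \<Rightarrow> real) \<Rightarrow> nat \<Rightarrow> (nat \<Rightarrow> nat) \<Rightarrow> real \<Rightarrow> real \<Rightarrow> (nat \<times> nat \<Rightarrow> (real^'d) \<times> real)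
     \<Rightarrow> (nat \<Rightarrow> real^'d) \<Rightarrow> real^'d \<Rightarrow> real^'d^'d \<Rightarrow> bool" where
  "optimal l T m \<gamma> \<beta> z a a0 U \<longleftrightarrow> feasible T \<gamma> \<beta> a a0 U \<and>
     (\<forall>a' a0' U'. feasible T \<gamma> \<beta> a' a0' U' \<longrightarrow> emp_loss l T m z a a0 U \<le> emp_loss l T m z a' a0' U')"

definition S_X :: "(nat \<Rightarrow> nat) \<Rightarrow> (nat \<times> nat \<Rightarrow> (real^'d) \<times> real) \<Rightarrow> nat \<Rightarrow> real" where
  "S_X m z t = (1 / real (m t)) * (\<Sum>i<m t. (norm (fst (z (t,i))))^2)"

end

theory Submission
  imports Defs
begin

lemma (in product_prob_space) mcdiarmid_mgf:
  fixes f :: "('i \<Rightarrow> 'a) \<Rightarrow> real"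
  assumes "finite I" and s: "s > 0"
    and "f \<in> borel_measurable (PiM I M)"
    and "\<forall>x\<in>space (PiM I M). \<bar>f x\<bar> \<le> K"
    and "\<forall>i\<in>I. \<forall>x\<in>space (PiM I M). \<forall>y\<in>space (M i). \<bar>f x - f (x(i:=y))\<bar> \<le> c i"
  shows "(\<integral>\<^sup>+x. exp (s * (f x - (\<integral>x. f x \<partial>PiM I M))) \<partial>PiM I M) \<le> ennreal (exp (s\<^sup>2 * (\<Sum>i\<in>I. (c i)\<^sup>2) / 8))"
  using assms(1,3-5)
proof (induction I arbitrary: f rule: finite_induct)
  case empty
  then show ?case by (simp add: PiM_empty lebesgue_integral_count_space_finite nn_integral_count_space_finite)
next
  case (insert i I f)
  note fm[measurable] = insert.prems(1)
  interpret PI: prob_space "PiM I M" by (rule prob_space_PiM) (simp add: prob_space)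
  interpret PiI: prob_space "PiM (insert i I) M" by (rule prob_space_PiM) (simp add: prob_space)
  define g where "g x = (\<integral>y. f (x(i:=y)) \<partial>M i)" for x
  have fxy[measurable]: "(\<lambda>(x,y). f (x(i:=y))) \<in> borel_measurable (PiM I M \<Otimes>\<^sub>M M i)"
    by measurable
  have gm[measurable]: "g \<in> borel_measurable (PiM I M)"
    unfolding g_def by measurable
  have upd_space: "x(i:=y) \<in> space (PiM (insert i I) M)" if "x \<in> space (PiM I M)" "y \<in> space (M i)" for x y
    using that by (auto simp: space_PiM PiE_def extensional_def Pi_def split: if_splits)
  have fmy: "(\<lambda>y. f (x(i:=y))) \<in> borel_measurable (M i)" if "x \<in> space (PiM I M)" for x
    using measurable_comp[OF measurable_component_update fm, OF that \<open>i \<notin> I\<close>] by (simp add: comp_def fun_upd_def)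
  have fint: "integrable (M i) (\<lambda>y. f (x(i:=y)))" if "x \<in> space (PiM I M)" for x
    by (rule M.integrable_const_bound[where B=K]) (use insert.prems(2) upd_space[OF that] fmy[OF that] in auto)
  have gK: "\<forall>x\<in>space (PiM I M). \<bar>g x\<bar> \<le> K"
  proof
    fix x assume x: "x \<in> space (PiM I M)"
    have "\<bar>g x\<bar> \<le> (\<integral>y. \<bar>f (x(i:=y))\<bar> \<partial>M i)"
      unfolding g_def using integral_norm_bound[of "M i" "\<lambda>y. f (x(i:=y))"] by simp
    also have "\<dots> \<le> (\<integral>y. K \<partial>M i)"
      by (rule integral_mono) (use fint[OF x] insert.prems(2) upd_space[OF x] in auto)
    finally show "\<bar>g x\<bar> \<le> K" by (simp add: M.prob_space)
  qed
  have gdiff: "\<forall>j\<in>I. \<forall>x\<in>space (PiM I M). \<forall>y\<in>space (M j). \<bar>g x - g (x(j:=y))\<bar> \<le> c j"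
  proof (intro ballI)
    fix j x y assume j: "j \<in> I" and x: "x \<in> space (PiM I M)" and y: "y \<in> space (M j)"
    have x': "x(j:=y) \<in> space (PiM I M)" using x y j by (auto simp: space_PiM PiE_def extensional_def Pi_def)
    have ij: "i \<noteq> j" using j insert.hyps by auto
    have tw: "(x(j:=y))(i:=y') = (x(i:=y'))(j:=y)" for y' using ij by (rule fun_upd_twist[symmetric])
    have g2: "g (x(j:=y)) = (\<integral>y'. f ((x(i:=y'))(j:=y)) \<partial>M i)"
      unfolding g_def tw ..
    have int2: "integrable (M i) (\<lambda>y'. f ((x(i:=y'))(j:=y)))"
      using fint[OF x'] unfolding tw .
    have "\<bar>g x - g (x(j:=y))\<bar> = \<bar>\<integral>y'. f (x(i:=y')) - f ((x(i:=y'))(j:=y)) \<partial>M i\<bar>"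
      unfolding g2 unfolding g_def using Bochner_Integration.integral_diff[OF fint[OF x] int2] by simp
    also have "\<dots> \<le> (\<integral>y'. \<bar>f (x(i:=y')) - f ((x(i:=y'))(j:=y))\<bar> \<partial>M i)"
      using integral_norm_bound[of "M i" "\<lambda>y'. f (x(i:=y')) - f ((x(i:=y'))(j:=y))"] by simp
    also have "\<dots> \<le> (\<integral>y'. c j \<partial>M i)"
    proof (rule integral_mono)
      show "integrable (M i) (\<lambda>y'. \<bar>f (x(i := y')) - f (x(i := y', j := y))\<bar>)"
        using fint[OF x] int2 by auto
    next
      show "integrable (M i) (\<lambda>y'. c j)" by simp
    next
      fix y' assume y': "y' \<in> space (M i)"
      have "j \<in> insert i I" using j by simp
      from insert.prems(3)[rule_format, OF this upd_space[OF x y'] y]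
      show "\<bar>f (x(i := y')) - f (x(i := y', j := y))\<bar> \<le> c j" .
    qed
    finally show "\<bar>g x - g (x(j:=y))\<bar> \<le> c j" by (simp add: M.prob_space)
  qed
  have IH: "(\<integral>\<^sup>+x. exp (s * (g x - (\<integral>x. g x \<partial>PiM I M))) \<partial>PiM I M) \<le> ennreal (exp (s\<^sup>2 * (\<Sum>i\<in>I. (c i)\<^sup>2) / 8))"
    by (rule insert.IH[OF gm gK gdiff])
  have fint2: "integrable (PiM (insert i I) M) f"
    by (rule PiI.integrable_const_bound[where B=K]) (use insert.prems(2) in auto)
  have Eeq: "(\<integral>x. f x \<partial>PiM (insert i I) M) = (\<integral>x. g x \<partial>PiM I M)"
    unfolding g_def by (rule product_integral_insert[OF insert.hyps fint2])
  define \<mu> where "\<mu> = (\<integral>x. g x \<partial>PiM I M)"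
  have inner: "(\<integral>\<^sup>+y. exp (s * (f (x(i:=y)) - \<mu>)) \<partial>M i) \<le> ennreal (exp (s * (g x - \<mu>))) * ennreal (exp (s\<^sup>2 * (c i)\<^sup>2 / 8))"
    if x: "x \<in> space (PiM I M)" for x
  proof -
    define a where "a = (INF y\<in>space (M i). f (x(i:=y)))"
    have bdd: "bdd_below ((\<lambda>y. f (x(i:=y))) ` space (M i))"
      using insert.prems(2) upd_space[OF x] by (intro bdd_belowI[where m="-K"]) force
    have ne: "space (M i) \<noteq> {}" by (rule M.not_empty)
    have ale: "a \<le> f (x(i:=y))" if "y \<in> space (M i)" for y
      unfolding a_def using bdd that by (rule cINF_lower)
    have ble: "f (x(i:=y)) \<le> a + c i" if y: "y \<in> space (M i)" for y
    proof -
      have "f (x(i:=y)) - c i \<le> f (x(i:=y'))" if "y' \<in> space (M i)" for y'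
      proof -
        have "\<bar>f (x(i:=y')) - f ((x(i:=y'))(i:=y))\<bar> \<le> c i"
          using insert.prems(3)[rule_format, of i "x(i:=y')" y] upd_space[OF x that] y by simp
        then show ?thesis by (simp add: abs_le_iff)
      qed
      then have "f (x(i:=y)) - c i \<le> a" unfolding a_def using ne by (intro cINF_greatest) auto
      then show ?thesis by simp
    qed
    interpret H: interval_bounded_random_variable "M i" "\<lambda>y. f (x(i:=y))" a "a + c i"
      by unfold_locales (use fmy[OF x] ale ble in auto)
    have H1: "(\<integral>\<^sup>+y. exp (s * (f (x(i:=y)) - g x)) \<partial>M i) \<le> ennreal (exp (s\<^sup>2 * (c i)\<^sup>2 / 8))"
      using H.Hoeffdings_lemma_nn_integral[OF s] unfolding g_def by simp
    have "(\<integral>\<^sup>+y. exp (s * (f (x(i:=y)) - \<mu>)) \<partial>M i) = (\<integral>\<^sup>+y. ennreal (exp (s * (g x - \<mu>))) * ennreal (exp (s * (f (x(i:=y)) - g x))) \<partial>M i)"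
      by (intro nn_integral_cong) (simp add: ennreal_mult''[symmetric] exp_add[symmetric] algebra_simps)
    also have "\<dots> = ennreal (exp (s * (g x - \<mu>))) * (\<integral>\<^sup>+y. exp (s * (f (x(i:=y)) - g x)) \<partial>M i)"
      by (rule nn_integral_cmult) (use fmy[OF x] in measurable)
    also have "\<dots> \<le> ennreal (exp (s * (g x - \<mu>))) * ennreal (exp (s\<^sup>2 * (c i)\<^sup>2 / 8))"
      by (intro mult_left_mono H1) auto
    finally show ?thesis .
  qed
  have "(\<integral>\<^sup>+x. exp (s * (f x - (\<integral>x. f x \<partial>PiM (insert i I) M))) \<partial>PiM (insert i I) M)
      = (\<integral>\<^sup>+x. (\<integral>\<^sup>+y. exp (s * (f (x(i:=y)) - \<mu>)) \<partial>M i) \<partial>PiM I M)"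
    unfolding Eeq \<mu>_def[symmetric] by (rule product_nn_integral_insert[OF insert.hyps]) measurable
  also have "\<dots> \<le> (\<integral>\<^sup>+x. ennreal (exp (s\<^sup>2 * (c i)\<^sup>2 / 8)) * ennreal (exp (s * (g x - \<mu>))) \<partial>PiM I M)"
    by (intro nn_integral_mono) (use inner in \<open>auto simp: mult.commute\<close>)
  also have "\<dots> = ennreal (exp (s\<^sup>2 * (c i)\<^sup>2 / 8)) * (\<integral>\<^sup>+x. exp (s * (g x - \<mu>)) \<partial>PiM I M)"
    by (rule nn_integral_cmult) measurable
  also have "\<dots> \<le> ennreal (exp (s\<^sup>2 * (c i)\<^sup>2 / 8)) * ennreal (exp (s\<^sup>2 * (\<Sum>i\<in>I. (c i)\<^sup>2) / 8))"
    by (intro mult_left_mono) (use IH in \<open>auto simp: \<mu>_def\<close>)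
  also have "\<dots> = ennreal (exp (s\<^sup>2 * (\<Sum>i\<in>insert i I. (c i)\<^sup>2) / 8))"
    using insert.hyps by (simp add: ennreal_mult''[symmetric] exp_add[symmetric] add_divide_distrib distrib_left)
  finally show ?case .
qed


lemma (in product_prob_space) mcdiarmid:
  fixes f :: "('i \<Rightarrow> 'a) \<Rightarrow> real"
  assumes fin: "finite I" and eps: "\<epsilon> > 0" and C: "(\<Sum>i\<in>I. (c i)\<^sup>2) > 0"
    and fm[measurable]: "f \<in> borel_measurable (PiM I M)"
    and fK: "\<forall>x\<in>space (PiM I M). \<bar>f x\<bar> \<le> K"
    and fd: "\<forall>i\<in>I. \<forall>x\<in>space (PiM I M). \<forall>y\<in>space (M i). \<bar>f x - f (x(i:=y))\<bar> \<le> c i"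
  shows "measure (PiM I M) {x\<in>space (PiM I M). \<epsilon> \<le> f x - (\<integral>x. f x \<partial>PiM I M)} \<le> exp (- 2 * \<epsilon>\<^sup>2 / (\<Sum>i\<in>I. (c i)\<^sup>2))"
proof -
  interpret P: prob_space "PiM I M" by (rule prob_space_PiM) (simp add: prob_space)
  define C where "C = (\<Sum>i\<in>I. (c i)\<^sup>2)"
  define \<mu> where "\<mu> = (\<integral>x. f x \<partial>PiM I M)"
  define s where "s = 4 * \<epsilon> / C"
  have s: "s > 0" using eps C by (simp add: s_def C_def)
  have mgf: "(\<integral>\<^sup>+x. exp (s * (f x - \<mu>)) \<partial>PiM I M) \<le> ennreal (exp (s\<^sup>2 * C / 8))"
    unfolding \<mu>_def C_def by (rule mcdiarmid_mgf[OF fin s fm fK fd])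
  have "emeasure (PiM I M) {x\<in>space (PiM I M). \<epsilon> \<le> f x - \<mu>}
      \<le> emeasure (PiM I M) {x\<in>space (PiM I M). 1 \<le> ennreal (exp (- s * \<epsilon>)) * ennreal (exp (s * (f x - \<mu>)))}"
  proof (rule emeasure_mono)
    show "{x \<in> space (PiM I M). \<epsilon> \<le> f x - \<mu>} \<subseteq> {x \<in> space (PiM I M). 1 \<le> ennreal (exp (- s * \<epsilon>)) * ennreal (exp (s * (f x - \<mu>)))}"
    proof safe
      fix x assume "x \<in> space (PiM I M)" "\<epsilon> \<le> f x - \<mu>"
      then have "s * \<epsilon> \<le> s * (f x - \<mu>)" using s by (intro mult_left_mono) auto
      then have "0 \<le> - s * \<epsilon> + s * (f x - \<mu>)" by simp
      then have "1 \<le> exp (- s * \<epsilon>) * exp (s * (f x - \<mu>))" by (simp add: exp_add[symmetric])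
      then show "1 \<le> ennreal (exp (- s * \<epsilon>)) * ennreal (exp (s * (f x - \<mu>)))"
        by (simp add: ennreal_mult''[symmetric])
    qed
  qed measurable
  also have "\<dots> \<le> ennreal (exp (- s * \<epsilon>)) * (\<integral>\<^sup>+x. ennreal (exp (s * (f x - \<mu>))) * indicator (space (PiM I M)) x \<partial>PiM I M)"
    using nn_integral_Markov_inequality[of "\<lambda>x. ennreal (exp (s * (f x - \<mu>)))" "space (PiM I M)" "PiM I M" "ennreal (exp (- s * \<epsilon>))"]
    by simp
  also have "(\<integral>\<^sup>+x. ennreal (exp (s * (f x - \<mu>))) * indicator (space (PiM I M)) x \<partial>PiM I M) = (\<integral>\<^sup>+x. exp (s * (f x - \<mu>)) \<partial>PiM I M)"
    by (rule nn_integral_cong) simp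
  also have "ennreal (exp (- s * \<epsilon>)) * \<dots> \<le> ennreal (exp (- s * \<epsilon>)) * ennreal (exp (s\<^sup>2 * C / 8))"
    by (intro mult_left_mono mgf) simp
  also have "\<dots> = ennreal (exp (- 2 * \<epsilon>\<^sup>2 / C))"
  proof -
    have "- s * \<epsilon> + s\<^sup>2 * C / 8 = - 2 * \<epsilon>\<^sup>2 / C" using C unfolding s_def C_def[symmetric]
      by (simp add: field_simps power2_eq_square)
    then show ?thesis by (simp add: ennreal_mult''[symmetric] exp_add[symmetric])
  qed
  finally have "emeasure (PiM I M) {x\<in>space (PiM I M). \<epsilon> \<le> f x - \<mu>} \<le> ennreal (exp (- 2 * \<epsilon>\<^sup>2 / C))" .
  then show ?thesis unfolding \<mu>_def C_def
    by (simp add: P.emeasure_eq_measure)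
qed


definition rsig :: "'i set \<Rightarrow> 'i set \<Rightarrow> 'i \<Rightarrow> real" where
  "rsig I S = (\<lambda>i. if i \<in> S then 1 else if i \<in> I then -1 else 0)"

definition ravg :: "'i set \<Rightarrow> (('i \<Rightarrow> real) \<Rightarrow> real) \<Rightarrow> real" where
  "ravg I F = (\<Sum>S\<in>Pow I. F (rsig I S)) / 2 ^ card I"

lemma ravg_insert:
  assumes "finite I" "k \<notin> I"
  shows "ravg (insert k I) F = (ravg I (\<lambda>\<sigma>. F (\<sigma>(k:=1))) + ravg I (\<lambda>\<sigma>. F (\<sigma>(k:=-1)))) / 2"
proof -
  have P: "Pow (insert k I) = Pow I \<union> insert k ` Pow I" by (rule Pow_insert)
  have disj: "Pow I \<inter> insert k ` Pow I = {}" using assms by auto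
  have inj: "inj_on (insert k) (Pow I)" using assms by (auto simp: inj_on_def)
  have s1: "rsig (insert k I) (insert k S) = (rsig I S)(k:=1)" if "S \<in> Pow I" for S
    using that assms by (auto simp: rsig_def fun_eq_iff)
  have s2: "rsig (insert k I) S = (rsig I S)(k:=-1)" if "S \<in> Pow I" for S
    using that assms by (auto simp: rsig_def fun_eq_iff)
  have "(\<Sum>S\<in>Pow (insert k I). F (rsig (insert k I) S))
      = (\<Sum>S\<in>Pow I. F (rsig (insert k I) S)) + (\<Sum>S\<in>insert k ` Pow I. F (rsig (insert k I) S))"
    unfolding P using assms disj by (intro sum.union_disjoint) auto
  also have "(\<Sum>S\<in>insert k ` Pow I. F (rsig (insert k I) S)) = (\<Sum>S\<in>Pow I. F ((rsig I S)(k:=1)))"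
    by (subst sum.reindex[OF inj], rule sum.cong, simp_all add: s1 del: fun_upd_apply)
  also have "(\<Sum>S\<in>Pow I. F (rsig (insert k I) S)) = (\<Sum>S\<in>Pow I. F ((rsig I S)(k:=-1)))"
    by (rule sum.cong, simp_all add: s2 del: fun_upd_apply)
  finally show ?thesis using assms unfolding ravg_def
    by (simp add: field_simps del: fun_upd_apply)
qed

lemma ravg_mono: "(\<And>\<sigma>. F \<sigma> \<le> G \<sigma>) \<Longrightarrow> ravg I F \<le> ravg I G"
  unfolding ravg_def by (intro divide_right_mono sum_mono) auto

lemma ravg_add: "ravg I (\<lambda>\<sigma>. F \<sigma> + G \<sigma>) = ravg I F + ravg I G"
  unfolding ravg_def by (simp add: sum.distrib add_divide_distrib)

lemma ravg_half: "ravg I (\<lambda>\<sigma>. (F \<sigma> + G \<sigma>) / 2) = (ravg I F + ravg I G) / 2"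
  unfolding ravg_def by (simp add: sum.distrib add_divide_distrib sum_divide_distrib mult.commute)

lemma ravg_cmult: "ravg I (\<lambda>\<sigma>. c * F \<sigma>) = c * ravg I F"
  unfolding ravg_def by (simp add: sum_distrib_left)

lemma ravg_const: "finite I \<Longrightarrow> ravg I (\<lambda>\<sigma>. c) = c"
  unfolding ravg_def by (simp add: card_Pow)

lemma ravg_neg:
  assumes "finite I"
  shows "ravg I (\<lambda>\<sigma>. F (\<lambda>i. - \<sigma> i)) = ravg I F"
proof -
  have inj: "inj_on (\<lambda>S. I - S) (Pow I)" by (auto simp: inj_on_def)
  have im: "(\<lambda>S. I - S) ` Pow I = Pow I" by (auto simp: image_iff intro!: exI[of _ "I - _"])
  have r: "(\<lambda>i. - rsig I S i) = rsig I (I - S)" if "S \<in> Pow I" for S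
    using that by (auto simp: rsig_def fun_eq_iff)
  have "(\<Sum>S\<in>Pow I. F (\<lambda>i. - rsig I S i)) = (\<Sum>S\<in>Pow I. F (rsig I (I - S)))"
    by (intro sum.cong) (auto simp: r)
  also have "\<dots> = (\<Sum>S\<in>(\<lambda>S. I - S) ` Pow I. F (rsig I S))"
    by (subst sum.reindex[OF inj]) simp
  also have "\<dots> = (\<Sum>S\<in>Pow I. F (rsig I S))" by (simp add: im)
  finally show ?thesis unfolding ravg_def by simp
qed

lemma one_coord_contraction:
  fixes b g :: "'w \<Rightarrow> real" and \<phi> :: "real \<Rightarrow> real"
  assumes W: "W \<noteq> {}" and bB: "\<forall>w\<in>W. \<bar>b w\<bar> \<le> Bb" and gG: "\<forall>w\<in>W. \<bar>g w\<bar> \<le> G"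
    and L: "L \<ge> 0" and lip: "\<forall>p q. \<bar>\<phi> p - \<phi> q\<bar> \<le> L * \<bar>p - q\<bar>"
  shows "(SUP w\<in>W. b w + \<phi> (g w)) + (SUP w\<in>W. b w - \<phi> (g w))
       \<le> (SUP w\<in>W. b w + L * g w) + (SUP w\<in>W. b w - L * g w)"
proof -
  have phiB: "\<bar>\<phi> (g w)\<bar> \<le> \<bar>\<phi> 0\<bar> + L * G" if "w \<in> W" for w
  proof -
    have "\<bar>\<phi> (g w) - \<phi> 0\<bar> \<le> L * \<bar>g w\<bar>" using lip[rule_format, of "g w" 0] by simp
    also have "\<dots> \<le> L * G" using gG that L by (intro mult_left_mono) auto
    finally show ?thesis by linarith
  qed
  have Lg: "\<bar>L * g w\<bar> \<le> L * G" if "w \<in> W" for w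
    using gG that L by (simp add: abs_mult mult_left_mono)
  have bdd1: "bdd_above ((\<lambda>w. b w + L * g w) ` W)"
    by (rule bdd_aboveI[where M="Bb + L * G"]) (use bB Lg in \<open>force simp: abs_le_iff\<close>)
  have bdd2: "bdd_above ((\<lambda>w. b w - L * g w) ` W)"
    by (rule bdd_aboveI[where M="Bb + L * G"]) (use bB Lg in \<open>force simp: abs_le_iff\<close>)
  define R where "R = (SUP w\<in>W. b w + L * g w) + (SUP w\<in>W. b w - L * g w)"
  have pair: "(b w1 + \<phi> (g w1)) + (b w2 - \<phi> (g w2)) \<le> R" if w: "w1 \<in> W" "w2 \<in> W" for w1 w2
  proof (cases "g w2 \<le> g w1")
    case True
    have "\<phi> (g w1) - \<phi> (g w2) \<le> L * (g w1 - g w2)" using lip[rule_format, of "g w1" "g w2"] True by simp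
    moreover have "b w1 + L * g w1 \<le> (SUP w\<in>W. b w + L * g w)" by (rule cSUP_upper[OF _ bdd1]) (use w in auto)
    moreover have "b w2 - L * g w2 \<le> (SUP w\<in>W. b w - L * g w)" by (rule cSUP_upper[OF _ bdd2]) (use w in auto)
    ultimately show ?thesis unfolding R_def by (simp add: algebra_simps)
  next
    case False
    have "\<phi> (g w1) - \<phi> (g w2) \<le> L * (g w2 - g w1)" using lip[rule_format, of "g w1" "g w2"] False by simp
    moreover have "b w2 + L * g w2 \<le> (SUP w\<in>W. b w + L * g w)" by (rule cSUP_upper[OF _ bdd1]) (use w in auto)
    moreover have "b w1 - L * g w1 \<le> (SUP w\<in>W. b w - L * g w)" by (rule cSUP_upper[OF _ bdd2]) (use w in auto)
    ultimately show ?thesis unfolding R_def by (simp add: algebra_simps)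
  qed
  have s1: "(SUP w\<in>W. b w + \<phi> (g w)) \<le> R - (b w2 - \<phi> (g w2))" if "w2 \<in> W" for w2
  proof (rule cSUP_least[OF W])
    fix x assume "x \<in> W"
    from pair[OF this that] show "b x + \<phi> (g x) \<le> R - (b w2 - \<phi> (g w2))" by linarith
  qed
  have "(SUP w\<in>W. b w - \<phi> (g w)) \<le> R - (SUP w\<in>W. b w + \<phi> (g w))"
  proof (rule cSUP_least[OF W])
    fix x assume "x \<in> W"
    from s1[OF this] show "b x - \<phi> (g x) \<le> R - (SUP w\<in>W. b w + \<phi> (g w))" by linarith
  qed
  then show ?thesis unfolding R_def by simp
qed


lemma contraction:
  fixes h :: "'w \<Rightarrow> 'i \<Rightarrow> real" and \<phi> :: "'i \<Rightarrow> real \<Rightarrow> real" and a :: "'w \<Rightarrow> real"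
  assumes "finite I" and W: "W \<noteq> {}" and hH: "\<forall>w\<in>W. \<forall>i\<in>I. \<bar>h w i\<bar> \<le> H" and L: "L \<ge> 0"
    and lip: "\<forall>i\<in>I. \<forall>p q. \<bar>\<phi> i p - \<phi> i q\<bar> \<le> L * \<bar>p - q\<bar>"
    and aA: "\<forall>w\<in>W. \<bar>a w\<bar> \<le> A"
  shows "ravg I (\<lambda>\<sigma>. SUP w\<in>W. a w + (\<Sum>i\<in>I. \<sigma> i * \<phi> i (h w i)))
       \<le> ravg I (\<lambda>\<sigma>. SUP w\<in>W. a w + (\<Sum>i\<in>I. \<sigma> i * (L * h w i)))"
  using assms(1) hH lip aA
proof (induction I arbitrary: a A rule: finite_induct)
  case empty
  then show ?case by simp
next
  case (insert k I a A)
  define \<Phi> where "\<Phi> w = \<phi> k (h w k)" for w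
  define Pk where "Pk = \<bar>\<phi> k 0\<bar> + L * H"
  have \<Phi>B: "\<bar>\<Phi> w\<bar> \<le> Pk" if "w \<in> W" for w
  proof -
    have "\<bar>\<phi> k (h w k) - \<phi> k 0\<bar> \<le> L * \<bar>h w k\<bar>" using insert.prems(2)[rule_format, of k "h w k" 0] by simp
    also have "\<dots> \<le> L * H" using insert.prems(1) that L by (intro mult_left_mono) auto
    finally show ?thesis unfolding \<Phi>_def Pk_def by linarith
  qed
  have sumk: "(\<Sum>i\<in>insert k I. (\<sigma>(k:=v)) i * X i) = v * X k + (\<Sum>i\<in>I. \<sigma> i * X i)" for \<sigma> v and X :: "'i \<Rightarrow> real"
  proof -
    have "(\<Sum>i\<in>I. (\<sigma>(k:=v)) i * X i) = (\<Sum>i\<in>I. \<sigma> i * X i)"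
      using insert.hyps by (intro sum.cong) auto
    then show ?thesis using insert.hyps by simp
  qed
  have hH': "\<forall>w\<in>W. \<forall>i\<in>I. \<bar>h w i\<bar> \<le> H" and lip': "\<forall>i\<in>I. \<forall>p q. \<bar>\<phi> i p - \<phi> i q\<bar> \<le> L * \<bar>p - q\<bar>"
    using insert.prems by auto
  have aP: "\<forall>w\<in>W. \<bar>a w + \<Phi> w\<bar> \<le> A + Pk" and aM: "\<forall>w\<in>W. \<bar>a w - \<Phi> w\<bar> \<le> A + Pk"
    using insert.prems(3) \<Phi>B by (force simp: abs_le_iff)+
  note IH1 = insert.IH[OF hH' lip' aP] and IH2 = insert.IH[OF hH' lip' aM]
  define b where "b \<sigma> w = a w + (\<Sum>i\<in>I. \<sigma> i * (L * h w i))" for \<sigma> w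
  have "ravg (insert k I) (\<lambda>\<sigma>. SUP w\<in>W. a w + (\<Sum>i\<in>insert k I. \<sigma> i * \<phi> i (h w i)))
      = (ravg I (\<lambda>\<sigma>. SUP w\<in>W. (a w + \<Phi> w) + (\<Sum>i\<in>I. \<sigma> i * \<phi> i (h w i)))
       + ravg I (\<lambda>\<sigma>. SUP w\<in>W. (a w - \<Phi> w) + (\<Sum>i\<in>I. \<sigma> i * \<phi> i (h w i)))) / 2"
    unfolding ravg_insert[OF insert.hyps] sumk \<Phi>_def by (simp add: algebra_simps)
  also have "\<dots> \<le> (ravg I (\<lambda>\<sigma>. SUP w\<in>W. (a w + \<Phi> w) + (\<Sum>i\<in>I. \<sigma> i * (L * h w i)))
       + ravg I (\<lambda>\<sigma>. SUP w\<in>W. (a w - \<Phi> w) + (\<Sum>i\<in>I. \<sigma> i * (L * h w i)))) / 2"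
    using IH1 IH2 by simp
  also have "\<dots> = ravg I (\<lambda>\<sigma>. ((SUP w\<in>W. b \<sigma> w + \<phi> k (h w k)) + (SUP w\<in>W. b \<sigma> w - \<phi> k (h w k))) / 2)"
    unfolding ravg_half b_def \<Phi>_def
    by (simp add: algebra_simps)
  also have "\<dots> \<le> ravg I (\<lambda>\<sigma>. ((SUP w\<in>W. b \<sigma> w + L * h w k) + (SUP w\<in>W. b \<sigma> w - L * h w k)) / 2)"
  proof (rule ravg_mono)
    fix \<sigma> :: "'i \<Rightarrow> real"
    have bB: "\<forall>w\<in>W. \<bar>b \<sigma> w\<bar> \<le> A + (\<Sum>i\<in>I. \<bar>\<sigma> i\<bar> * (L * H))"
    proof
      fix w assume w: "w \<in> W"
      have "\<bar>(\<Sum>i\<in>I. \<sigma> i * (L * h w i))\<bar> \<le> (\<Sum>i\<in>I. \<bar>\<sigma> i * (L * h w i)\<bar>)" by (rule sum_abs)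
      also have "\<dots> \<le> (\<Sum>i\<in>I. \<bar>\<sigma> i\<bar> * (L * H))"
        using hH' w L by (intro sum_mono) (auto simp: abs_mult intro!: mult_left_mono)
      finally show "\<bar>b \<sigma> w\<bar> \<le> A + (\<Sum>i\<in>I. \<bar>\<sigma> i\<bar> * (L * H))"
        using insert.prems(3) w unfolding b_def by force
    qed
    have gG: "\<forall>w\<in>W. \<bar>h w k\<bar> \<le> H" using insert.prems(1) by auto
    have lk: "\<forall>p q. \<bar>\<phi> k p - \<phi> k q\<bar> \<le> L * \<bar>p - q\<bar>" using insert.prems(2) by auto
    show "((SUP w\<in>W. b \<sigma> w + \<phi> k (h w k)) + (SUP w\<in>W. b \<sigma> w - \<phi> k (h w k))) / 2
        \<le> ((SUP w\<in>W. b \<sigma> w + L * h w k) + (SUP w\<in>W. b \<sigma> w - L * h w k)) / 2"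
      using one_coord_contraction[OF W bB gG L lk] by simp
  qed
  also have "\<dots> = ravg (insert k I) (\<lambda>\<sigma>. SUP w\<in>W. a w + (\<Sum>i\<in>insert k I. \<sigma> i * (L * h w i)))"
    unfolding ravg_insert[OF insert.hyps] sumk b_def
    unfolding ravg_half
    by (simp add: algebra_simps)
  finally show ?case .
qed


lemma orth_norm:
  fixes U :: "real^'d^'d"
  assumes "transpose U ** U = mat 1"
  shows "norm (transpose U *v v) = norm v"
proof -
  have o: "U ** transpose U = mat 1" using assms orthogonal_matrix orthogonal_matrix_def by blast
  have "(transpose U *v v) \<bullet> (transpose U *v v) = v \<bullet> (U *v (transpose U *v v))"
    by (metis dot_lmul_matrix transpose_transpose vector_transpose_matrix)
  also have "\<dots> = v \<bullet> v" by (simp only: matrix_vector_mul_assoc o matrix_vector_mul_lid)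
  finally show ?thesis by (simp add: norm_eq_sqrt_inner)
qed


lemma ravg_sum: "ravg I (\<lambda>\<sigma>. \<Sum>k\<in>K. f k \<sigma>) = (\<Sum>k\<in>K. ravg I (f k))"
  unfolding ravg_def by (subst sum.swap) (simp add: sum_divide_distrib)

lemma ravg_cong: "(\<And>S. S \<subseteq> I \<Longrightarrow> F (rsig I S) = G (rsig I S)) \<Longrightarrow> ravg I F = ravg I G"
  unfolding ravg_def by (intro arg_cong2[where f="(/)"] sum.cong) auto

lemma ravg_pair:
  assumes "finite I" "k \<in> I" "k' \<in> I"
  shows "ravg I (\<lambda>\<sigma>. \<sigma> k * \<sigma> k') = (if k = k' then 1 else 0)"
proof (cases "k = k'")
  case True
  have "ravg I (\<lambda>\<sigma>. \<sigma> k * \<sigma> k') = ravg I (\<lambda>\<sigma>. 1)"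
    by (rule ravg_cong) (use True assms in \<open>auto simp: rsig_def\<close>)
  then show ?thesis using True assms by (simp add: ravg_const)
next
  case False
  define J where "J = I - {k}"
  have I: "I = insert k J" "k \<notin> J" "finite J" using assms by (auto simp: J_def)
  have "ravg I (\<lambda>\<sigma>. \<sigma> k * \<sigma> k') = (ravg J (\<lambda>\<sigma>. \<sigma> k') + ravg J (\<lambda>\<sigma>. - \<sigma> k')) / 2"
    unfolding I(1) ravg_insert[OF I(3,2)] using False by simp
  also have "\<dots> = 0" using ravg_cmult[of J "-1" "\<lambda>\<sigma>. \<sigma> k'"] by simp
  finally show ?thesis using False by simp
qed

lemma ravg_sq:
  fixes y :: "'j \<Rightarrow> 'v::real_inner"
  assumes "finite I" "finite J" "inj_on e J" "e ` J \<subseteq> I"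
  shows "ravg I (\<lambda>\<sigma>. (norm (\<Sum>j\<in>J. \<sigma> (e j) *\<^sub>R y j))\<^sup>2) = (\<Sum>j\<in>J. (norm (y j))\<^sup>2)"
proof -
  have "(norm (\<Sum>j\<in>J. \<sigma> (e j) *\<^sub>R y j))\<^sup>2 = (\<Sum>j\<in>J. \<Sum>j'\<in>J. (\<sigma> (e j) * \<sigma> (e j')) * (y j \<bullet> y j'))" for \<sigma>
    by (simp add: power2_norm_eq_inner inner_sum_left inner_sum_right sum_distrib_left mult_ac inner_commute)
  then have "ravg I (\<lambda>\<sigma>. (norm (\<Sum>j\<in>J. \<sigma> (e j) *\<^sub>R y j))\<^sup>2)
      = (\<Sum>j\<in>J. \<Sum>j'\<in>J. ravg I (\<lambda>\<sigma>. (\<sigma> (e j) * \<sigma> (e j')) * (y j \<bullet> y j')))"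
    by (simp add: ravg_sum)
  also have "\<dots> = (\<Sum>j\<in>J. \<Sum>j'\<in>J. (if j = j' then y j \<bullet> y j' else 0))"
  proof (intro sum.cong refl)
    fix j j' assume "j \<in> J" "j' \<in> J"
    note jj = this
    have ej: "e j \<in> I" "e j' \<in> I" using jj assms(4) by auto
    have p: "ravg I (\<lambda>\<sigma>. \<sigma> (e j) * \<sigma> (e j')) = (if j = j' then 1 else 0)"
      using ravg_pair[OF assms(1) ej] assms(3) jj by (simp add: inj_on_eq_iff)
    have "ravg I (\<lambda>\<sigma>. (\<sigma> (e j) * \<sigma> (e j')) * (y j \<bullet> y j')) = (y j \<bullet> y j') * ravg I (\<lambda>\<sigma>. \<sigma> (e j) * \<sigma> (e j'))"
      by (subst mult.commute) (rule ravg_cmult)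
    then show "ravg I (\<lambda>\<sigma>. (\<sigma> (e j) * \<sigma> (e j')) * (y j \<bullet> y j')) = (if j = j' then y j \<bullet> y j' else 0)"
      using p by simp
  qed
  also have "\<dots> = (\<Sum>j\<in>J. (norm (y j))\<^sup>2)"
    using assms(2) by (simp add: power2_norm_eq_inner)
  finally show ?thesis .
qed

lemma ravg_sqrt:
  assumes "finite I" and X: "\<And>\<sigma>. X \<sigma> \<ge> 0"
  shows "ravg I (\<lambda>\<sigma>. sqrt (X \<sigma>)) \<le> sqrt (ravg I X)"
proof (cases "ravg I X = 0")
  case True
  have "(\<Sum>S\<in>Pow I. X (rsig I S)) = 0" using True unfolding ravg_def by simp
  then have "\<forall>S\<in>Pow I. X (rsig I S) = 0" using assms by (subst (asm) sum_nonneg_eq_0_iff) auto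
  then have "ravg I (\<lambda>\<sigma>. sqrt (X \<sigma>)) = ravg I (\<lambda>\<sigma>. 0)" by (intro ravg_cong) auto
  then show ?thesis using assms True by (simp add: ravg_const)
next
  case False
  have nn: "ravg I X \<ge> 0" unfolding ravg_def using X by (intro divide_nonneg_pos sum_nonneg) auto
  define t where "t = sqrt (ravg I X)"
  have t: "t > 0" using nn False by (simp add: t_def)
  have amgm: "sqrt x \<le> (x / t + t) / 2" if "x \<ge> 0" for x
  proof -
    have "0 \<le> (sqrt x - t)\<^sup>2" by simp
    then have "2 * t * sqrt x \<le> x + t\<^sup>2" using that by (simp add: power2_eq_square algebra_simps)
    then have "sqrt x \<le> (x + t\<^sup>2) / (2 * t)" using t by (simp add: field_simps)
    also have "\<dots> = (x / t + t) / 2" using t by (simp add: field_simps power2_eq_square)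
    finally show ?thesis .
  qed
  have "ravg I (\<lambda>\<sigma>. sqrt (X \<sigma>)) \<le> ravg I (\<lambda>\<sigma>. (X \<sigma> / t + t) / 2)"
    by (rule ravg_mono) (use amgm X in auto)
  also have "\<dots> = (ravg I X / t + t) / 2"
    using ravg_half[of I "\<lambda>\<sigma>. X \<sigma> / t" "\<lambda>_. t"] ravg_cmult[of I "1/t" X] assms(1)
    by (simp add: ravg_const)
  also have "\<dots> = t" using t nn unfolding t_def by (simp add: field_simps)
  finally show ?thesis unfolding t_def .
qed


lemma sidx_Sigma: "sample_idx T m = Sigma {..<T} (\<lambda>t. {..<m t})"
  by (auto simp: sample_idx_def)

lemma finite_sidx: "finite (sample_idx T m)"
  by (simp add: sidx_Sigma)

lemma pred_alt: "pred a a0 U t x = (a t + a0) \<bullet> (transpose U *v x)"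
  by (simp add: pred_def)

lemma lin_bound:
  fixes x :: "nat \<times> nat \<Rightarrow> real^'d" and U :: "real^'d^'d"
  assumes feas: "feasible T \<gamma> \<beta> a a0 U" and g: "\<gamma> > 0" and b: "\<beta> > 0"
  shows "(\<Sum>ti\<in>sample_idx T m. \<sigma> ti * pred a a0 U (fst ti) (x ti))
     \<le> sqrt (real T / \<gamma>) * sqrt (\<Sum>t<T. (norm (\<Sum>i<m t. \<sigma> (t,i) *\<^sub>R x (t,i)))\<^sup>2)
       + sqrt (1 / \<beta>) * norm (\<Sum>ti\<in>sample_idx T m. \<sigma> ti *\<^sub>R x ti)"
proof -
  define v where "v t = (\<Sum>i<m t. \<sigma> (t,i) *\<^sub>R x (t,i))" for t
  define u where "u t = transpose U *v v t" for t
  have orth: "transpose U ** U = mat 1" using feas by (simp add: feasible_def)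
  have nu: "norm (u t) = norm (v t)" for t unfolding u_def by (rule orth_norm[OF orth])
  have lin: "transpose U *v (\<Sum>i\<in>A. c i *\<^sub>R y i) = (\<Sum>i\<in>A. c i *\<^sub>R (transpose U *v y i))" for A c and y :: "'k \<Rightarrow> real^'d"
    by (simp add: linear_sum[OF matrix_vector_mul_linear] linear_scale[OF matrix_vector_mul_linear])
  have "(\<Sum>ti\<in>sample_idx T m. \<sigma> ti * pred a a0 U (fst ti) (x ti))
      = (\<Sum>t<T. \<Sum>i<m t. \<sigma> (t,i) * ((a t + a0) \<bullet> (transpose U *v x (t,i))))"
    unfolding sidx_Sigma by (simp add: sum.Sigma pred_def split_def)
  also have "\<dots> = (\<Sum>t<T. (a t + a0) \<bullet> u t)"
    unfolding u_def v_def lin by (simp only: inner_sum_right inner_scaleR_right)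
  also have "\<dots> = (\<Sum>t<T. a t \<bullet> u t) + a0 \<bullet> (\<Sum>t<T. u t)"
    by (simp add: inner_add_left sum.distrib inner_sum_right)
  also have "(\<Sum>t<T. a t \<bullet> u t) \<le> sqrt (real T / \<gamma>) * sqrt (\<Sum>t<T. (norm (v t))\<^sup>2)"
  proof -
    define S where "S = sqrt (\<Sum>t<T. (norm (v t))\<^sup>2)"
    have S0: "S \<ge> 0" unfolding S_def by (simp add: sum_nonneg)
    have "(\<Sum>t<T. a t \<bullet> u t) = (\<Sum>j\<in>UNIV. \<Sum>t<T. a t $ j * u t $ j)"
      by (simp add: inner_vec_def sum.swap[of _ "{..<T}"])
    also have "\<dots> \<le> (\<Sum>j\<in>UNIV. \<Sum>t<T. \<bar>a t $ j\<bar> * \<bar>u t $ j\<bar>)"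
      by (intro sum_mono) (auto simp: abs_mult[symmetric])
    also have "\<dots> \<le> (\<Sum>j\<in>UNIV. L2_set (\<lambda>t. a t $ j) {..<T} * L2_set (\<lambda>t. u t $ j) {..<T})"
      by (intro sum_mono L2_set_mult_ineq)
    also have "\<dots> \<le> (\<Sum>j\<in>UNIV. L2_set (\<lambda>t. a t $ j) {..<T} * S)"
    proof (intro sum_mono mult_left_mono)
      fix j
      show "L2_set (\<lambda>t. u t $ j) {..<T} \<le> S"
        unfolding L2_set_def S_def
      proof (rule real_sqrt_le_mono, rule sum_mono)
        fix t
        have "\<bar>u t $ j\<bar> \<le> norm (u t)" by (rule component_le_norm_cart)
        then have "(u t $ j)\<^sup>2 \<le> (norm (u t))\<^sup>2"
          by (metis abs_ge_zero abs_le_square_iff abs_norm_cancel) 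
        then show "(u t $ j)\<^sup>2 \<le> (norm (v t))\<^sup>2" by (simp add: nu)
      qed
    qed (simp add: L2_set_def sum_nonneg)
    also have "\<dots> = norm21 a T * S"
      by (simp add: norm21_def L2_set_def sum_distrib_right)
    also have "\<dots> \<le> sqrt (real T / \<gamma>) * S"
    proof (rule mult_right_mono[OF _ S0])
      have n0: "norm21 a T \<ge> 0" unfolding norm21_def by (intro sum_nonneg) (simp add: sum_nonneg)
      have "(norm21 a T)\<^sup>2 \<le> real T / \<gamma>" using feas by (simp add: feasible_def)
      then show "norm21 a T \<le> sqrt (real T / \<gamma>)" using n0 by (simp add: real_le_rsqrt)
    qed
    finally show ?thesis unfolding S_def .
  qed
  also have "a0 \<bullet> (\<Sum>t<T. u t) \<le> sqrt (1 / \<beta>) * norm (\<Sum>ti\<in>sample_idx T m. \<sigma> ti *\<^sub>R x ti)"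
  proof -
    have sv: "(\<Sum>t<T. v t) = (\<Sum>ti\<in>sample_idx T m. \<sigma> ti *\<^sub>R x ti)"
      unfolding v_def sidx_Sigma by (simp add: sum.Sigma split_def)
    have su0: "(\<Sum>t<T. u t) = transpose U *v (\<Sum>t<T. v t)"
      unfolding u_def by (simp only: linear_sum[OF matrix_vector_mul_linear])
    have su: "(\<Sum>t<T. u t) = transpose U *v (\<Sum>ti\<in>sample_idx T m. \<sigma> ti *\<^sub>R x ti)"
      unfolding su0 sv ..
    have "a0 \<bullet> (\<Sum>t<T. u t) \<le> norm a0 * norm (\<Sum>t<T. u t)" by (rule norm_cauchy_schwarz)
    also have "\<dots> = norm a0 * norm (\<Sum>ti\<in>sample_idx T m. \<sigma> ti *\<^sub>R x ti)"
      unfolding su orth_norm[OF orth] ..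
    also have "\<dots> \<le> sqrt (1 / \<beta>) * norm (\<Sum>ti\<in>sample_idx T m. \<sigma> ti *\<^sub>R x ti)"
    proof (rule mult_right_mono)
      have "(norm a0)\<^sup>2 \<le> 1 / \<beta>" using feas by (simp add: feasible_def)
      then show "norm a0 \<le> sqrt (1 / \<beta>)" by (simp add: real_le_rsqrt)
    qed simp
    finally show ?thesis .
  qed
  finally show ?thesis unfolding v_def by simp
qed


lemma sup_bound:
  fixes f :: "'h \<Rightarrow> real"
  assumes "\<Theta> \<noteq> {}" "\<forall>\<theta>\<in>\<Theta>. \<bar>f \<theta>\<bar> \<le> C"
  shows "\<bar>SUP \<theta>\<in>\<Theta>. f \<theta>\<bar> \<le> C"
proof -
  have bdd: "bdd_above (f ` \<Theta>)" using assms(2) by (intro bdd_aboveI[where M=C]) (auto simp: abs_le_iff)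
  obtain \<theta>0 where t0: "\<theta>0 \<in> \<Theta>" using assms(1) by auto
  have "f \<theta>0 \<le> (SUP \<theta>\<in>\<Theta>. f \<theta>)" by (rule cSUP_upper[OF t0 bdd])
  moreover have "(SUP \<theta>\<in>\<Theta>. f \<theta>) \<le> C" using assms by (intro cSUP_least) (auto simp: abs_le_iff)
  ultimately show ?thesis using assms(2) t0 by (auto simp: abs_le_iff)
qed

lemma sup_meas:
  fixes f :: "'h \<Rightarrow> 'x \<Rightarrow> real"
  assumes "countable \<Theta>" "\<And>\<theta>. \<theta> \<in> \<Theta> \<Longrightarrow> f \<theta> \<in> borel_measurable N"
    "\<forall>\<theta>\<in>\<Theta>. \<forall>x\<in>space N. \<bar>f \<theta> x\<bar> \<le> C"
  shows "(\<lambda>x. SUP \<theta>\<in>\<Theta>. f \<theta> x) \<in> borel_measurable N"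
proof (rule borel_measurable_cSUP)
  fix x assume x: "x \<in> space N"
  show "bdd_above ((\<lambda>\<theta>. f \<theta> x) ` \<Theta>)"
  proof (rule bdd_aboveI[where M=C])
    fix y assume "y \<in> (\<lambda>\<theta>. f \<theta> x) ` \<Theta>"
    then obtain \<theta> where "\<theta> \<in> \<Theta>" "y = f \<theta> x" by auto
    then show "y \<le> C" using assms(3) x by (auto simp: abs_le_iff)
  qed
qed (use assms in auto)

lemma ravg_meas:
  assumes "\<And>S. S \<subseteq> I \<Longrightarrow> (\<lambda>x. F (rsig I S) x) \<in> borel_measurable N"
  shows "(\<lambda>x. ravg I (\<lambda>\<sigma>. F \<sigma> x)) \<in> borel_measurable N"
  unfolding ravg_def using assms by (intro borel_measurable_divide borel_measurable_sum) auto

lemma ravg_abs: "finite I \<Longrightarrow> (\<And>S. S \<subseteq> I \<Longrightarrow> \<bar>F (rsig I S)\<bar> \<le> C) \<Longrightarrow> \<bar>ravg I F\<bar> \<le> C"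
proof -
  assume fin: "finite I" and b: "\<And>S. S \<subseteq> I \<Longrightarrow> \<bar>F (rsig I S)\<bar> \<le> C"
  have "\<bar>\<Sum>S\<in>Pow I. F (rsig I S)\<bar> \<le> (\<Sum>S\<in>Pow I. C)"
    using b by (intro order.trans[OF sum_abs] sum_mono) auto
  then have s: "\<bar>\<Sum>S\<in>Pow I. F (rsig I S)\<bar> \<le> 2 ^ card I * C" using fin by (simp add: card_Pow)
  have p: "(0::real) < 2 ^ card I" by simp
  have "\<bar>ravg I F\<bar> = \<bar>\<Sum>S\<in>Pow I. F (rsig I S)\<bar> / 2 ^ card I" unfolding ravg_def by simp
  also have "\<dots> \<le> C" using s p by (simp add: divide_le_eq mult.commute)
  finally show ?thesis .
qed

lemma rsig_abs: "\<bar>rsig I S i\<bar> \<le> 1"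
  by (simp add: rsig_def)


definition empf :: "'i set \<Rightarrow> ('h \<Rightarrow> 'i \<Rightarrow> 'a \<Rightarrow> real) \<Rightarrow> ('i \<Rightarrow> 'a) \<Rightarrow> 'h \<Rightarrow> real" where
  "empf I g z \<theta> = (\<Sum>i\<in>I. g \<theta> i (z i))"

definition phiS :: "'i set \<Rightarrow> ('i \<Rightarrow> 'a measure) \<Rightarrow> 'h set \<Rightarrow> ('h \<Rightarrow> 'i \<Rightarrow> 'a \<Rightarrow> real) \<Rightarrow> ('i \<Rightarrow> 'a) \<Rightarrow> real" where
  "phiS I M \<Theta> g z = (SUP \<theta>\<in>\<Theta>. (\<integral>z'. empf I g z' \<theta> \<partial>PiM I M) - empf I g z \<theta>)"

definition radS :: "'i set \<Rightarrow> 'h set \<Rightarrow> ('h \<Rightarrow> 'i \<Rightarrow> 'a \<Rightarrow> real) \<Rightarrow> ('i \<Rightarrow> 'a) \<Rightarrow> real" where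
  "radS I \<Theta> g z = ravg I (\<lambda>\<sigma>. SUP \<theta>\<in>\<Theta>. \<Sum>i\<in>I. \<sigma> i * g \<theta> i (z i))"

definition swp :: "'i set \<Rightarrow> 'i \<times> bool \<Rightarrow> 'i \<times> bool" where
  "swp S j = (fst j, if fst j \<in> S then snd j else \<not> snd j)"

context product_prob_space
begin

lemma pps_N: "product_prob_space (\<lambda>j::'i \<times> bool. M (fst j))"
  by (intro product_prob_spaceI) (simp add: prob_space)

lemma marginal_reindex:
  fixes F :: "('i \<Rightarrow> 'a) \<Rightarrow> real"
  assumes fin: "finite I" and Fm: "F \<in> borel_measurable (PiM I M)" and "K \<subseteq> UNIV" and b: "(\<lambda>i. (i, b)) ` I \<subseteq> K"
  shows "(\<integral>\<omega>. F (\<lambda>i\<in>I. \<omega> (i, b)) \<partial>PiM K (\<lambda>j. M (fst j))) = (\<integral>z. F z \<partial>PiM I M)"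
proof -
  have d: "distr (PiM K (\<lambda>j. M (fst j))) (PiM I (\<lambda>i. M (fst (i, b)))) (\<lambda>\<omega>. \<lambda>i\<in>I. \<omega> (i, b)) = PiM I (\<lambda>i. M (fst (i, b)))"
    by (rule distr_PiM_reindex) (use b in \<open>auto simp: prob_space inj_on_def\<close>)
  have mm: "(\<lambda>\<omega>. \<lambda>i\<in>I. \<omega> (i, b)) \<in> measurable (PiM K (\<lambda>j. M (fst j))) (PiM I M)"
  proof (rule measurable_restrict)
    fix i assume "i \<in> I"
    then have "(i, b) \<in> K" using b by auto
    from measurable_component_singleton[OF this, of "\<lambda>j. M (fst j)"]
    show "(\<lambda>\<omega>. \<omega> (i, b)) \<in> measurable (PiM K (\<lambda>j. M (fst j))) (M i)" by simp
  qed
  have "(\<integral>z. F z \<partial>PiM I M) = (\<integral>z. F z \<partial>distr (PiM K (\<lambda>j. M (fst j))) (PiM I M) (\<lambda>\<omega>. \<lambda>i\<in>I. \<omega> (i, b)))"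
    using d by simp
  also have "\<dots> = (\<integral>\<omega>. F (\<lambda>i\<in>I. \<omega> (i, b)) \<partial>PiM K (\<lambda>j. M (fst j)))"
    by (rule integral_distr[OF mm Fm])
  finally show ?thesis ..
qed


lemma restrict_space_map:
  assumes "\<omega> \<in> space (PiM K (\<lambda>j. M (fst j)))" "(\<lambda>i. (i, b)) ` I \<subseteq> K"
  shows "(\<lambda>i\<in>I. \<omega> (i, b)) \<in> space (PiM I M)"
  using assms by (auto simp: space_PiM PiE_def Pi_def)

lemma double_sample:
  fixes H :: "('i \<Rightarrow> 'a) \<Rightarrow> ('i \<Rightarrow> 'a) \<Rightarrow> real"
  assumes fin: "finite I" and Hm: "case_prod H \<in> borel_measurable (PiM I M \<Otimes>\<^sub>M PiM I M)"
    and Hb: "\<forall>z\<in>space (PiM I M). \<forall>z'\<in>space (PiM I M). \<bar>H z z'\<bar> \<le> C"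
  shows "(\<integral>\<omega>. H (\<lambda>i\<in>I. \<omega> (i,True)) (\<lambda>i\<in>I. \<omega> (i,False)) \<partial>PiM (I \<times> UNIV) (\<lambda>j. M (fst j)))
       = (\<integral>z. (\<integral>z'. H z z' \<partial>PiM I M) \<partial>PiM I M)"
proof -
  interpret N: product_prob_space "\<lambda>j::'i \<times> bool. M (fst j)" "I \<times> UNIV" by (rule pps_N)
  interpret P: prob_space "PiM I M" by (rule prob_space_PiM) (simp add: prob_space)
  define JT where "JT = I \<times> {True}"
  define JF where "JF = I \<times> {False}"
  have J: "I \<times> UNIV = JT \<union> JF" "JT \<inter> JF = {}" "finite JT" "finite JF"
    using fin by (auto simp: JT_def JF_def UNIV_bool)
  define f where "f \<omega> = H (\<lambda>i\<in>I. \<omega> (i,True)) (\<lambda>i\<in>I. \<omega> (i,False))" for \<omega>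
  have mb: "(\<lambda>\<omega>. \<lambda>i\<in>I. \<omega> (i, b)) \<in> measurable (PiM K (\<lambda>j. M (fst j))) (PiM I M)"
    if "(\<lambda>i. (i, b)) ` I \<subseteq> K" for K b
  proof (rule measurable_restrict)
    fix i assume "i \<in> I"
    then have "(i, b) \<in> K" using that by auto
    from measurable_component_singleton[OF this, of "\<lambda>j. M (fst j)"]
    show "(\<lambda>\<omega>. \<omega> (i, b)) \<in> measurable (PiM K (\<lambda>j. M (fst j))) (M i)" by simp
  qed
  have fm: "f \<in> borel_measurable (PiM (I \<times> UNIV) (\<lambda>j. M (fst j)))"
  proof -
    have "(\<lambda>\<omega>. ((\<lambda>i\<in>I. \<omega> (i,True)), (\<lambda>i\<in>I. \<omega> (i,False)))) \<in> measurable (PiM (I \<times> UNIV) (\<lambda>j. M (fst j))) (PiM I M \<Otimes>\<^sub>M PiM I M)"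
      by (intro measurable_Pair mb) auto
    from measurable_comp[OF this Hm] show ?thesis unfolding f_def[abs_def] by (simp add: comp_def)
  qed
  have fint: "integrable (PiM (I \<times> UNIV) (\<lambda>j. M (fst j))) f"
  proof (rule N.integrable_const_bound[where B=C])
    show "AE x in PiM (I \<times> UNIV) (\<lambda>j. M (fst j)). norm (f x) \<le> C"
      unfolding f_def
    proof (intro AE_I2)
      fix x assume x: "x \<in> space (PiM (I \<times> (UNIV::bool set)) (\<lambda>j. M (fst j)))"
      have "(\<lambda>i\<in>I. x (i, True)) \<in> space (PiM I M)" "(\<lambda>i\<in>I. x (i, False)) \<in> space (PiM I M)"
        by (rule restrict_space_map[OF x], auto)+
      then show "norm (H (\<lambda>i\<in>I. x (i, True)) (\<lambda>i\<in>I. x (i, False))) \<le> C" using Hb by auto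
    qed
  qed (rule fm)
  have "(\<integral>\<omega>. f \<omega> \<partial>PiM (I \<times> UNIV) (\<lambda>j. M (fst j)))
      = (\<integral>x. (\<integral>y. f (merge JT JF (x, y)) \<partial>PiM JF (\<lambda>j. M (fst j))) \<partial>PiM JT (\<lambda>j. M (fst j)))"
    unfolding J(1) by (rule N.product_integral_fold[OF J(2-4) fint[unfolded J(1)]])
  also have "\<dots> = (\<integral>x. (\<integral>y. H (\<lambda>i\<in>I. x (i,True)) (\<lambda>i\<in>I. y (i,False)) \<partial>PiM JF (\<lambda>j. M (fst j))) \<partial>PiM JT (\<lambda>j. M (fst j)))"
  proof (rule Bochner_Integration.integral_cong[OF refl], rule Bochner_Integration.integral_cong[OF refl])
    fix x y :: "'i \<times> bool \<Rightarrow> 'a"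
    have "(\<lambda>i\<in>I. merge JT JF (x, y) (i, True)) = (\<lambda>i\<in>I. x (i,True))"
      "(\<lambda>i\<in>I. merge JT JF (x, y) (i, False)) = (\<lambda>i\<in>I. y (i,False))"
      by (auto simp: JT_def JF_def merge_def fun_eq_iff)
    then show "f (merge JT JF (x, y)) = H (\<lambda>i\<in>I. x (i,True)) (\<lambda>i\<in>I. y (i,False))"
      unfolding f_def by simp
  qed
  also have "\<dots> = (\<integral>x. (\<integral>z'. H (\<lambda>i\<in>I. x (i,True)) z' \<partial>PiM I M) \<partial>PiM JT (\<lambda>j. M (fst j)))"
  proof (rule Bochner_Integration.integral_cong[OF refl])
    fix x assume x: "x \<in> space (PiM JT (\<lambda>j. M (fst j)))"
    have xs: "(\<lambda>i\<in>I. x (i,True)) \<in> space (PiM I M)"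
      by (rule restrict_space_map[OF x]) (auto simp: JT_def)
    show "(\<integral>y. H (\<lambda>i\<in>I. x (i,True)) (\<lambda>i\<in>I. y (i,False)) \<partial>PiM JF (\<lambda>j. M (fst j))) = (\<integral>z'. H (\<lambda>i\<in>I. x (i,True)) z' \<partial>PiM I M)"
    proof -
      have Hz: "H (\<lambda>i\<in>I. x (i,True)) \<in> borel_measurable (PiM I M)"
        using measurable_Pair2[OF Hm xs] by simp
      show ?thesis by (rule marginal_reindex[OF fin Hz]) (auto simp: JF_def)
    qed
  qed
  also have "\<dots> = (\<integral>z. (\<integral>z'. H z z' \<partial>PiM I M) \<partial>PiM I M)"
    by (rule marginal_reindex[OF fin]) (use Hm in \<open>auto simp: JT_def intro!: P.borel_measurable_lebesgue_integral\<close>)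
  finally show ?thesis unfolding f_def .
qed


lemma swap_inv:
  fixes F :: "('i \<times> bool \<Rightarrow> 'a) \<Rightarrow> real"
  assumes Fm: "F \<in> borel_measurable (PiM (I \<times> UNIV) (\<lambda>j. M (fst j)))"
  shows "(\<integral>\<omega>. F (\<lambda>j\<in>I \<times> UNIV. \<omega> (swp S j)) \<partial>PiM (I \<times> UNIV) (\<lambda>j. M (fst j))) = (\<integral>\<omega>. F \<omega> \<partial>PiM (I \<times> UNIV) (\<lambda>j. M (fst j)))"
proof -
  have fs: "fst (swp S j) = fst j" for j by (simp add: swp_def)
  have d: "distr (PiM (I \<times> UNIV) (\<lambda>j. M (fst j))) (PiM (I \<times> UNIV) (\<lambda>j. M (fst (swp S j)))) (\<lambda>\<omega>. \<lambda>j\<in>I \<times> UNIV. \<omega> (swp S j))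
      = PiM (I \<times> UNIV) (\<lambda>j. M (fst (swp S j)))"
    by (rule distr_PiM_reindex) (auto simp: prob_space inj_on_def swp_def split: if_splits)
  then have d': "distr (PiM (I \<times> UNIV) (\<lambda>j. M (fst j))) (PiM (I \<times> UNIV) (\<lambda>j. M (fst j))) (\<lambda>\<omega>. \<lambda>j\<in>I \<times> UNIV. \<omega> (swp S j))
      = PiM (I \<times> UNIV) (\<lambda>j. M (fst j))"
    by (simp add: fs)
  have mm: "(\<lambda>\<omega>. \<lambda>j\<in>I \<times> UNIV. \<omega> (swp S j)) \<in> measurable (PiM (I \<times> UNIV) (\<lambda>j. M (fst j))) (PiM (I \<times> UNIV) (\<lambda>j. M (fst j)))"
  proof (rule measurable_restrict)
    fix j :: "'i \<times> bool" assume "j \<in> I \<times> UNIV"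
    then have "swp S j \<in> I \<times> UNIV" by (auto simp: swp_def)
    from measurable_component_singleton[OF this, of "\<lambda>j. M (fst j)"]
    show "(\<lambda>\<omega>. \<omega> (swp S j)) \<in> measurable (PiM (I \<times> UNIV) (\<lambda>j. M (fst j))) (M (fst j))" by (simp add: fs)
  qed
  have "(\<integral>\<omega>. F \<omega> \<partial>PiM (I \<times> UNIV) (\<lambda>j. M (fst j))) = (\<integral>\<omega>. F \<omega> \<partial>distr (PiM (I \<times> UNIV) (\<lambda>j. M (fst j))) (PiM (I \<times> UNIV) (\<lambda>j. M (fst j))) (\<lambda>\<omega>. \<lambda>j\<in>I \<times> UNIV. \<omega> (swp S j)))"
    using d' by simp
  also have "\<dots> = (\<integral>\<omega>. F (\<lambda>j\<in>I \<times> UNIV. \<omega> (swp S j)) \<partial>PiM (I \<times> UNIV) (\<lambda>j. M (fst j)))"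
    by (rule integral_distr[OF mm Fm])
  finally show ?thesis ..
qed

end


lemma absdiff: "0 \<le> (a::real) \<Longrightarrow> a \<le> C \<Longrightarrow> 0 \<le> b \<Longrightarrow> b \<le> C \<Longrightarrow> \<bar>a - b\<bar> \<le> C"
  by (simp add: abs_le_iff)

context product_prob_space
begin

lemma pairmap_meas:
  "(\<lambda>\<omega>. ((\<lambda>i\<in>I. \<omega> (i,True)), (\<lambda>i\<in>I. \<omega> (i,False)))) \<in> measurable (PiM (I \<times> UNIV) (\<lambda>j. M (fst j))) (PiM I M \<Otimes>\<^sub>M PiM I M)"
proof -
  have mb: "(\<lambda>\<omega>. \<lambda>i\<in>I. \<omega> (i, b)) \<in> measurable (PiM (I \<times> UNIV) (\<lambda>j. M (fst j))) (PiM I M)" for b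
  proof (rule measurable_restrict)
    fix i assume "i \<in> I"
    then have "(i, b) \<in> I \<times> UNIV" by auto
    from measurable_component_singleton[OF this, of "\<lambda>j. M (fst j)"]
    show "(\<lambda>\<omega>. \<omega> (i, b)) \<in> measurable (PiM (I \<times> UNIV) (\<lambda>j. M (fst j))) (M i)" by simp
  qed
  show ?thesis by (intro measurable_Pair mb)
qed

lemma symmetrization:
  fixes g :: "'h \<Rightarrow> 'i \<Rightarrow> 'a \<Rightarrow> real"
  assumes fin: "finite I" and cnt: "countable \<Theta>" and ne: "\<Theta> \<noteq> {}"
    and gm: "\<And>\<theta> i. i \<in> I \<Longrightarrow> g \<theta> i \<in> borel_measurable (M i)"
    and g0: "\<And>\<theta> i p. 0 \<le> g \<theta> i p" and gB: "\<And>\<theta> i p. g \<theta> i p \<le> B"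
  shows "(\<integral>z. phiS I M \<Theta> g z \<partial>PiM I M) \<le> 2 * (\<integral>z. radS I \<Theta> g z \<partial>PiM I M)"
proof -
  interpret N: product_prob_space "\<lambda>j::'i \<times> bool. M (fst j)" "I \<times> UNIV" by (rule pps_N)
  let ?P = "PiM I M" and ?N = "PiM (I \<times> (UNIV::bool set)) (\<lambda>j. M (fst j))"
  define n where "n = real (card I)"
  have n0: "n \<ge> 0" by (simp add: n_def)
  have B0: "B \<ge> 0" using g0 gB by (meson order_trans)
  have nB0: "n * B \<ge> 0" using n0 B0 by simp
  have comp: "(\<lambda>z. g \<theta> i (z i)) \<in> borel_measurable ?P" if "i \<in> I" for \<theta> i
    using measurable_comp[OF measurable_component_singleton[OF that, of M] gm[OF that]] by (simp add: comp_def)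
  have compN: "(\<lambda>\<omega>. g \<theta> i (\<omega> (i,b))) \<in> borel_measurable ?N" if "i \<in> I" for \<theta> i b
  proof -
    have "(i,b) \<in> I \<times> (UNIV::bool set)" using that by simp
    from measurable_component_singleton[OF this, of "\<lambda>j. M (fst j)"]
    have "(\<lambda>\<omega>. \<omega> (i,b)) \<in> measurable ?N (M i)" by simp
    from measurable_comp[OF this gm[OF that]]
    show ?thesis by (simp add: comp_def)
  qed
  have em: "(\<lambda>z. empf I g z \<theta>) \<in> borel_measurable ?P" for \<theta>
    unfolding empf_def by (intro borel_measurable_sum comp)
  have eb0: "0 \<le> empf I g z \<theta>" for z \<theta> unfolding empf_def by (intro sum_nonneg g0)
  have ebB: "empf I g z \<theta> \<le> n * B" for z \<theta>
    unfolding empf_def n_def using sum_bounded_above[of I "\<lambda>i. g \<theta> i (z i)" B] gB by simp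
  have eint: "integrable ?P (\<lambda>z. empf I g z \<theta>)" for \<theta>
    by (rule P.integrable_const_bound[where B="n*B"]) (use eb0 ebB em in auto)
  define E where "E \<theta> = (\<integral>z'. empf I g z' \<theta> \<partial>?P)" for \<theta>
  have E0: "0 \<le> E \<theta>" for \<theta> unfolding E_def by (intro integral_nonneg_AE AE_I2 eb0)
  have EB: "E \<theta> \<le> n * B" for \<theta>
  proof -
    have "E \<theta> \<le> (\<integral>z'. n * B \<partial>?P)" unfolding E_def by (rule integral_mono[OF eint]) (use ebB in auto)
    then show ?thesis by (simp add: P.prob_space)
  qed
  define G2 where "G2 z z' = (SUP \<theta>\<in>\<Theta>. empf I g z' \<theta> - empf I g z \<theta>)" for z z'
  have dB: "\<bar>empf I g z' \<theta> - empf I g z \<theta>\<bar> \<le> n * B" for z z' \<theta>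
    using eb0[of z' \<theta>] ebB[of z' \<theta>] eb0[of z \<theta>] ebB[of z \<theta>] by (simp add: abs_le_iff)
  have G2b: "\<bar>G2 z z'\<bar> \<le> n * B" for z z'
    unfolding G2_def by (rule sup_bound[OF ne]) (use dB in auto)
  have G2bdd: "bdd_above ((\<lambda>\<theta>. empf I g z' \<theta> - empf I g z \<theta>) ` \<Theta>)" for z z'
    by (rule bdd_aboveI[where M="n*B"]) (use dB in \<open>auto simp: abs_le_iff\<close>)
  have G2m: "case_prod G2 \<in> borel_measurable (?P \<Otimes>\<^sub>M ?P)"
  proof -
    have "(\<lambda>x. SUP \<theta>\<in>\<Theta>. empf I g (snd x) \<theta> - empf I g (fst x) \<theta>) \<in> borel_measurable (?P \<Otimes>\<^sub>M ?P)"
    proof (rule sup_meas[OF cnt])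
      fix \<theta>
      show "(\<lambda>x. empf I g (snd x) \<theta> - empf I g (fst x) \<theta>) \<in> borel_measurable (?P \<Otimes>\<^sub>M ?P)"
        using measurable_compose[OF measurable_snd em] measurable_compose[OF measurable_fst em]
        by (intro borel_measurable_diff) auto
    qed (use dB in auto)
    moreover have "case_prod G2 = (\<lambda>x. SUP \<theta>\<in>\<Theta>. empf I g (snd x) \<theta> - empf I g (fst x) \<theta>)"
      by (auto simp: G2_def fun_eq_iff)
    ultimately show ?thesis by simp
  qed
  have G2m1: "G2 z \<in> borel_measurable ?P" if "z \<in> space ?P" for z
    using measurable_Pair2[OF G2m that] by simp
  have G2int: "integrable ?P (G2 z)" if "z \<in> space ?P" for z
    by (rule P.integrable_const_bound[where B="n*B"]) (use G2b G2m1[OF that] in auto)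
  have stepb: "phiS I M \<Theta> g z \<le> (\<integral>z'. G2 z z' \<partial>?P)" if z: "z \<in> space ?P" for z
    unfolding phiS_def E_def[symmetric]
  proof (rule cSUP_least[OF ne])
    fix \<theta> assume th: "\<theta> \<in> \<Theta>"
    have "E \<theta> - empf I g z \<theta> = (\<integral>z'. empf I g z' \<theta> - empf I g z \<theta> \<partial>?P)"
      unfolding E_def using eint by (simp add: P.prob_space)
    also have "\<dots> \<le> (\<integral>z'. G2 z z' \<partial>?P)"
    proof (rule integral_mono)
      show "integrable ?P (\<lambda>z'. empf I g z' \<theta> - empf I g z \<theta>)" using eint by simp
      show "integrable ?P (G2 z)" by (rule G2int[OF z])
      fix z' show "empf I g z' \<theta> - empf I g z \<theta> \<le> G2 z z'"
        unfolding G2_def by (rule cSUP_upper[OF th G2bdd])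
    qed
    finally show "E \<theta> - empf I g z \<theta> \<le> (\<integral>z'. G2 z z' \<partial>?P)" .
  qed
  have phim: "phiS I M \<Theta> g \<in> borel_measurable ?P"
  proof -
    have "(\<lambda>z. SUP \<theta>\<in>\<Theta>. E \<theta> - empf I g z \<theta>) \<in> borel_measurable ?P"
    proof (rule sup_meas[OF cnt, where C="n*B"])
      fix \<theta> show "(\<lambda>z. E \<theta> - empf I g z \<theta>) \<in> borel_measurable ?P" using em by simp
    next
      show "\<forall>\<theta>\<in>\<Theta>. \<forall>x\<in>space ?P. \<bar>E \<theta> - empf I g x \<theta>\<bar> \<le> n * B"
        using E0 EB eb0 ebB by (blast intro: absdiff)
    qed
    then show ?thesis unfolding phiS_def[abs_def] E_def by simp
  qed
  have phib: "\<bar>phiS I M \<Theta> g z\<bar> \<le> n * B" for z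
    unfolding phiS_def E_def[symmetric] by (rule sup_bound[OF ne]) (use E0 EB eb0 ebB in \<open>blast intro: absdiff\<close>)
  have innerm: "(\<lambda>z. \<integral>z'. G2 z z' \<partial>?P) \<in> borel_measurable ?P"
    using P.borel_measurable_lebesgue_integral[OF G2m] by simp
  have innerb: "\<bar>\<integral>z'. G2 z z' \<partial>?P\<bar> \<le> n * B" if "z \<in> space ?P" for z
  proof -
    have "\<bar>\<integral>z'. G2 z z' \<partial>?P\<bar> \<le> (\<integral>z'. \<bar>G2 z z'\<bar> \<partial>?P)"
      using integral_norm_bound[of ?P "G2 z"] by simp
    also have "\<dots> \<le> (\<integral>z'. n * B \<partial>?P)"
      by (rule integral_mono) (use G2int[OF that] G2b in auto)
    finally show ?thesis by (simp add: P.prob_space)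
  qed
  have stepc: "(\<integral>z. phiS I M \<Theta> g z \<partial>?P) \<le> (\<integral>z. (\<integral>z'. G2 z z' \<partial>?P) \<partial>?P)"
  proof (rule integral_mono_AE)
    show "integrable ?P (phiS I M \<Theta> g)"
      by (rule P.integrable_const_bound[where B="n*B"]) (use phim phib in auto)
    show "integrable ?P (\<lambda>z. \<integral>z'. G2 z z' \<partial>?P)"
      by (rule P.integrable_const_bound[where B="n*B"]) (use innerm innerb in auto)
    show "AE z in ?P. phiS I M \<Theta> g z \<le> (\<integral>z'. G2 z z' \<partial>?P)"
      using stepb by (intro AE_I2) auto
  qed
  also have "\<dots> = (\<integral>\<omega>. G2 (\<lambda>i\<in>I. \<omega> (i,True)) (\<lambda>i\<in>I. \<omega> (i,False)) \<partial>?N)"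
    by (rule double_sample[OF fin G2m, symmetric]) (use G2b in auto)
  finally have sc: "(\<integral>z. phiS I M \<Theta> g z \<partial>?P) \<le> (\<integral>\<omega>. G2 (\<lambda>i\<in>I. \<omega> (i,True)) (\<lambda>i\<in>I. \<omega> (i,False)) \<partial>?N)" .
  define Gs where "Gs \<sigma> \<omega> = (SUP \<theta>\<in>\<Theta>. \<Sum>i\<in>I. \<sigma> i * (g \<theta> i (\<omega> (i,False)) - g \<theta> i (\<omega> (i,True))))" for \<sigma> \<omega>
  have Fm: "(\<lambda>\<omega>. G2 (\<lambda>i\<in>I. \<omega> (i,True)) (\<lambda>i\<in>I. \<omega> (i,False))) \<in> borel_measurable ?N"
    using measurable_comp[OF pairmap_meas G2m] by (simp add: comp_def)
  have swapeq: "G2 (\<lambda>i\<in>I. (\<lambda>j\<in>I \<times> UNIV. \<omega> (swp S j)) (i,True)) (\<lambda>i\<in>I. (\<lambda>j\<in>I \<times> UNIV. \<omega> (swp S j)) (i,False))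
      = Gs (rsig I S) \<omega>" for S \<omega>
  proof -
    have "empf I g (\<lambda>i\<in>I. (\<lambda>j\<in>I \<times> UNIV. \<omega> (swp S j)) (i,False)) \<theta> - empf I g (\<lambda>i\<in>I. (\<lambda>j\<in>I \<times> UNIV. \<omega> (swp S j)) (i,True)) \<theta>
        = (\<Sum>i\<in>I. rsig I S i * (g \<theta> i (\<omega> (i,False)) - g \<theta> i (\<omega> (i,True))))" for \<theta>
      unfolding empf_def sum_subtractf[symmetric]
      by (intro sum.cong refl) (auto simp: swp_def rsig_def)
    then show ?thesis unfolding G2_def Gs_def by simp
  qed
  have Gsm: "Gs \<sigma> \<in> borel_measurable ?N" for \<sigma>
  proof -
    have "(\<lambda>\<omega>. SUP \<theta>\<in>\<Theta>. \<Sum>i\<in>I. \<sigma> i * (g \<theta> i (\<omega> (i,False)) - g \<theta> i (\<omega> (i,True)))) \<in> borel_measurable ?N"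
    proof (rule sup_meas[OF cnt])
      fix \<theta>
      show "(\<lambda>\<omega>. \<Sum>i\<in>I. \<sigma> i * (g \<theta> i (\<omega> (i,False)) - g \<theta> i (\<omega> (i,True)))) \<in> borel_measurable ?N"
        by (intro borel_measurable_sum borel_measurable_times borel_measurable_const borel_measurable_diff compN)
    next
      show "\<forall>\<theta>\<in>\<Theta>. \<forall>x\<in>space ?N. \<bar>\<Sum>i\<in>I. \<sigma> i * (g \<theta> i (x (i,False)) - g \<theta> i (x (i,True)))\<bar> \<le> (\<Sum>i\<in>I. \<bar>\<sigma> i\<bar> * B)"
      proof (intro ballI order.trans[OF sum_abs] sum_mono)
        fix \<theta> x i
        have "\<bar>g \<theta> i (x (i,False)) - g \<theta> i (x (i,True))\<bar> \<le> B"
          using g0[of \<theta> i] gB[of \<theta> i] by (intro absdiff g0 gB)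
        then show "\<bar>\<sigma> i * (g \<theta> i (x (i,False)) - g \<theta> i (x (i,True)))\<bar> \<le> \<bar>\<sigma> i\<bar> * B"
          by (simp add: abs_mult mult_left_mono)
      qed
    qed
    then show ?thesis unfolding Gs_def[abs_def] .
  qed
  have Gsb: "\<bar>Gs (rsig I S) \<omega>\<bar> \<le> n * B" for S \<omega>
    unfolding Gs_def
  proof (rule sup_bound[OF ne], intro ballI)
    fix \<theta>
    have "\<bar>\<Sum>i\<in>I. rsig I S i * (g \<theta> i (\<omega> (i,False)) - g \<theta> i (\<omega> (i,True)))\<bar> \<le> (\<Sum>i\<in>I. B)"
    proof (intro order.trans[OF sum_abs] sum_mono)
      fix i
      have "\<bar>g \<theta> i (\<omega> (i,False)) - g \<theta> i (\<omega> (i,True))\<bar> \<le> B"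
        using g0[of \<theta> i] gB[of \<theta> i] by (intro absdiff g0 gB)
      then show "\<bar>rsig I S i * (g \<theta> i (\<omega> (i,False)) - g \<theta> i (\<omega> (i,True)))\<bar> \<le> B"
      proof -
        have "\<bar>rsig I S i\<bar> * \<bar>g \<theta> i (\<omega> (i,False)) - g \<theta> i (\<omega> (i,True))\<bar> \<le> 1 * B"
          by (rule mult_mono[OF rsig_abs \<open>\<bar>g \<theta> i (\<omega> (i,False)) - g \<theta> i (\<omega> (i,True))\<bar> \<le> B\<close>]) (auto simp: B0)
        then show ?thesis by (simp add: abs_mult)
      qed
    qed
    then show "\<bar>\<Sum>i\<in>I. rsig I S i * (g \<theta> i (\<omega> (i,False)) - g \<theta> i (\<omega> (i,True)))\<bar> \<le> n * B"
      by (simp add: n_def)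
  qed
  have Gsint: "integrable ?N (Gs (rsig I S))" for S
    by (rule N.integrable_const_bound[where B="n*B"]) (use Gsb Gsm in auto)
  have radm: "radS I \<Theta> g \<in> borel_measurable ?P"
  proof -
    have "(\<lambda>z. ravg I (\<lambda>\<sigma>. SUP \<theta>\<in>\<Theta>. \<Sum>i\<in>I. \<sigma> i * g \<theta> i (z i))) \<in> borel_measurable ?P"
    proof (rule ravg_meas)
      fix S assume "S \<subseteq> I"
      show "(\<lambda>z. SUP \<theta>\<in>\<Theta>. \<Sum>i\<in>I. rsig I S i * g \<theta> i (z i)) \<in> borel_measurable ?P"
      proof (rule sup_meas[OF cnt, where C="n*B"])
        fix \<theta> show "(\<lambda>z. \<Sum>i\<in>I. rsig I S i * g \<theta> i (z i)) \<in> borel_measurable ?P"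
          by (intro borel_measurable_sum borel_measurable_times borel_measurable_const comp)
      next
        show "\<forall>\<theta>\<in>\<Theta>. \<forall>x\<in>space ?P. \<bar>\<Sum>i\<in>I. rsig I S i * g \<theta> i (x i)\<bar> \<le> n * B"
        proof (intro ballI)
          fix \<theta> x
          have "\<bar>\<Sum>i\<in>I. rsig I S i * g \<theta> i (x i)\<bar> \<le> (\<Sum>i\<in>I. B)"
          proof (intro order.trans[OF sum_abs] sum_mono)
            fix i
            have "\<bar>rsig I S i\<bar> * \<bar>g \<theta> i (x i)\<bar> \<le> 1 * B"
              by (rule mult_mono[OF rsig_abs]) (auto simp: B0 g0 gB)
            then show "\<bar>rsig I S i * g \<theta> i (x i)\<bar> \<le> B" by (simp add: abs_mult)
          qed
          then show "\<bar>\<Sum>i\<in>I. rsig I S i * g \<theta> i (x i)\<bar> \<le> n * B" by (simp add: n_def)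
        qed
      qed
    qed
    then show ?thesis unfolding radS_def[abs_def] .
  qed
  have radb: "\<bar>radS I \<Theta> g z\<bar> \<le> n * B" for z
    unfolding radS_def
  proof (rule ravg_abs[OF fin], rule sup_bound[OF ne], intro ballI)
    fix S \<theta>
    have "\<bar>\<Sum>i\<in>I. rsig I S i * g \<theta> i (z i)\<bar> \<le> (\<Sum>i\<in>I. B)"
    proof (intro order.trans[OF sum_abs] sum_mono)
      fix i
      have "\<bar>rsig I S i\<bar> * \<bar>g \<theta> i (z i)\<bar> \<le> 1 * B"
        by (rule mult_mono[OF rsig_abs]) (auto simp: B0 g0 gB)
      then show "\<bar>rsig I S i * g \<theta> i (z i)\<bar> \<le> B" by (simp add: abs_mult)
    qed
    then show "\<bar>\<Sum>i\<in>I. rsig I S i * g \<theta> i (z i)\<bar> \<le> n * B" by (simp add: n_def)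
  qed
  have radNint: "integrable ?N (\<lambda>\<omega>. radS I \<Theta> g (\<lambda>i\<in>I. \<omega> (i,b)))" for b
  proof -
    have mb: "(\<lambda>\<omega>. \<lambda>i\<in>I. \<omega> (i, b)) \<in> measurable ?N ?P"
    proof (rule measurable_restrict)
      fix i assume "i \<in> I"
      then have "(i, b) \<in> I \<times> (UNIV :: bool set)" by auto
      from measurable_component_singleton[OF this, of "\<lambda>j. M (fst j)"]
      show "(\<lambda>\<omega>. \<omega> (i, b)) \<in> measurable ?N (M i)" by simp
    qed
    show ?thesis
      by (rule N.integrable_const_bound[where B="n*B"]) (use radb measurable_comp[OF mb radm] in \<open>auto simp: comp_def\<close>)
  qed
  have eachS: "(\<integral>\<omega>. G2 (\<lambda>i\<in>I. \<omega> (i,True)) (\<lambda>i\<in>I. \<omega> (i,False)) \<partial>?N) = (\<integral>\<omega>. Gs (rsig I S) \<omega> \<partial>?N)" for S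
    using swap_inv[OF Fm, of S] unfolding swapeq by simp
  have "(\<integral>\<omega>. G2 (\<lambda>i\<in>I. \<omega> (i,True)) (\<lambda>i\<in>I. \<omega> (i,False)) \<partial>?N) = ravg I (\<lambda>\<sigma>. \<integral>\<omega>. Gs \<sigma> \<omega> \<partial>?N)"
  proof -
    have "ravg I (\<lambda>\<sigma>. \<integral>\<omega>. Gs \<sigma> \<omega> \<partial>?N) = ravg I (\<lambda>\<sigma>. (\<integral>\<omega>. G2 (\<lambda>i\<in>I. \<omega> (i,True)) (\<lambda>i\<in>I. \<omega> (i,False)) \<partial>?N))"
      by (rule ravg_cong) (rule eachS[symmetric])
    then show ?thesis using fin by (simp add: ravg_const)
  qed
  also have "\<dots> = (\<integral>\<omega>. ravg I (\<lambda>\<sigma>. Gs \<sigma> \<omega>) \<partial>?N)"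
    unfolding ravg_def by (subst integral_divide_zero) (simp add: integral_sum Gsint)
  also have "\<dots> \<le> (\<integral>\<omega>. radS I \<Theta> g (\<lambda>i\<in>I. \<omega> (i,False)) + radS I \<Theta> g (\<lambda>i\<in>I. \<omega> (i,True)) \<partial>?N)"
  proof (rule integral_mono)
    show "integrable ?N (\<lambda>\<omega>. ravg I (\<lambda>\<sigma>. Gs \<sigma> \<omega>))"
    proof (rule N.integrable_const_bound[where B="n*B"])
      show "AE x in ?N. norm (ravg I (\<lambda>\<sigma>. Gs \<sigma> x)) \<le> n * B"
        using ravg_abs[OF fin, of "\<lambda>\<sigma>. Gs \<sigma> _" "n*B"] Gsb by (intro AE_I2) simp
      show "(\<lambda>\<omega>. ravg I (\<lambda>\<sigma>. Gs \<sigma> \<omega>)) \<in> borel_measurable ?N"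
        by (rule ravg_meas) (use Gsm in simp)
    qed
    show "integrable ?N (\<lambda>\<omega>. radS I \<Theta> g (\<lambda>i\<in>I. \<omega> (i,False)) + radS I \<Theta> g (\<lambda>i\<in>I. \<omega> (i,True)))"
      using radNint[of False] radNint[of True] by simp
  next
    fix \<omega> :: "'i \<times> bool \<Rightarrow> 'a"
    define A where "A \<sigma> = (SUP \<theta>\<in>\<Theta>. \<Sum>i\<in>I. \<sigma> i * g \<theta> i (\<omega> (i,False)))" for \<sigma> :: "'i \<Rightarrow> real"
    define C where "C \<sigma> = (SUP \<theta>\<in>\<Theta>. \<Sum>i\<in>I. \<sigma> i * g \<theta> i (\<omega> (i,True)))" for \<sigma> :: "'i \<Rightarrow> real"
    have bddS: "bdd_above ((\<lambda>\<theta>. \<Sum>i\<in>I. \<sigma> i * g \<theta> i (\<omega> (i,b))) ` \<Theta>)" for \<sigma> b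
    proof (rule bdd_aboveI[where M="\<Sum>i\<in>I. \<bar>\<sigma> i\<bar> * B"])
      fix y assume "y \<in> (\<lambda>\<theta>. \<Sum>i\<in>I. \<sigma> i * g \<theta> i (\<omega> (i,b))) ` \<Theta>"
      then obtain \<theta> where y: "y = (\<Sum>i\<in>I. \<sigma> i * g \<theta> i (\<omega> (i,b)))" by auto
      have "y \<le> (\<Sum>i\<in>I. \<bar>\<sigma> i * g \<theta> i (\<omega> (i,b))\<bar>)" unfolding y by (intro sum_mono) simp
      also have "\<dots> \<le> (\<Sum>i\<in>I. \<bar>\<sigma> i\<bar> * B)"
        by (intro sum_mono) (simp add: abs_mult mult_left_mono g0 gB)
      finally show "y \<le> (\<Sum>i\<in>I. \<bar>\<sigma> i\<bar> * B)" .
    qed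
    have "ravg I (\<lambda>\<sigma>. Gs \<sigma> \<omega>) \<le> ravg I (\<lambda>\<sigma>. A \<sigma> + C (\<lambda>i. - \<sigma> i))"
    proof (rule ravg_mono)
      fix \<sigma> :: "'i \<Rightarrow> real"
      show "Gs \<sigma> \<omega> \<le> A \<sigma> + C (\<lambda>i. - \<sigma> i)"
        unfolding Gs_def
      proof (rule cSUP_least[OF ne])
        fix \<theta> assume th: "\<theta> \<in> \<Theta>"
        have "(\<Sum>i\<in>I. \<sigma> i * (g \<theta> i (\<omega> (i,False)) - g \<theta> i (\<omega> (i,True))))
            = (\<Sum>i\<in>I. \<sigma> i * g \<theta> i (\<omega> (i,False))) + (\<Sum>i\<in>I. - \<sigma> i * g \<theta> i (\<omega> (i,True)))"
          by (simp add: algebra_simps sum_subtractf sum_negf)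
        also have "\<dots> \<le> A \<sigma> + C (\<lambda>i. - \<sigma> i)"
          unfolding A_def C_def by (intro add_mono cSUP_upper[OF th] bddS)
        finally show "(\<Sum>i\<in>I. \<sigma> i * (g \<theta> i (\<omega> (i,False)) - g \<theta> i (\<omega> (i,True)))) \<le> A \<sigma> + C (\<lambda>i. - \<sigma> i)" .
      qed
    qed
    also have "\<dots> = ravg I A + ravg I C"
      by (simp add: ravg_add ravg_neg[OF fin, of C])
    also have "ravg I A = radS I \<Theta> g (\<lambda>i\<in>I. \<omega> (i,False))"
      unfolding radS_def A_def by (intro arg_cong[where f="ravg I"] ext SUP_cong refl sum.cong) auto
    also have "ravg I C = radS I \<Theta> g (\<lambda>i\<in>I. \<omega> (i,True))"
      unfolding radS_def C_def by (intro arg_cong[where f="ravg I"] ext SUP_cong refl sum.cong) auto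
    finally show "ravg I (\<lambda>\<sigma>. Gs \<sigma> \<omega>) \<le> radS I \<Theta> g (\<lambda>i\<in>I. \<omega> (i,False)) + radS I \<Theta> g (\<lambda>i\<in>I. \<omega> (i,True))" .
  qed
  also have "\<dots> = (\<integral>\<omega>. radS I \<Theta> g (\<lambda>i\<in>I. \<omega> (i,False)) \<partial>?N) + (\<integral>\<omega>. radS I \<Theta> g (\<lambda>i\<in>I. \<omega> (i,True)) \<partial>?N)"
    by (rule Bochner_Integration.integral_add[OF radNint radNint])
  also have "\<dots> = 2 * (\<integral>z. radS I \<Theta> g z \<partial>?P)"
  proof -
    have k: "(\<lambda>i. (i,b)) ` I \<subseteq> I \<times> UNIV" for b by auto
    show ?thesis using marginal_reindex[OF fin radm subset_UNIV k[of False]] marginal_reindex[OF fin radm subset_UNIV k[of True]]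
      by simp
  qed
  finally show ?thesis using sc by simp
qed

end


lemma sup_diff:
  fixes f h :: "'h \<Rightarrow> real"
  assumes ne: "\<Theta> \<noteq> {}" and fb: "\<forall>\<theta>\<in>\<Theta>. \<bar>f \<theta>\<bar> \<le> C" and hb: "\<forall>\<theta>\<in>\<Theta>. \<bar>h \<theta>\<bar> \<le> C"
    and d: "\<forall>\<theta>\<in>\<Theta>. \<bar>f \<theta> - h \<theta>\<bar> \<le> c"
  shows "\<bar>(SUP \<theta>\<in>\<Theta>. f \<theta>) - (SUP \<theta>\<in>\<Theta>. h \<theta>)\<bar> \<le> c"
proof -
  have bf: "bdd_above (f ` \<Theta>)" using fb by (intro bdd_aboveI[where M=C]) (auto simp: abs_le_iff)
  have bh: "bdd_above (h ` \<Theta>)" using hb by (intro bdd_aboveI[where M=C]) (auto simp: abs_le_iff)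
  have 1: "(SUP \<theta>\<in>\<Theta>. f \<theta>) \<le> (SUP \<theta>\<in>\<Theta>. h \<theta>) + c"
  proof (rule cSUP_least[OF ne])
    fix \<theta> assume t: "\<theta> \<in> \<Theta>"
    have "h \<theta> \<le> (SUP \<theta>\<in>\<Theta>. h \<theta>)" by (rule cSUP_upper[OF t bh])
    then show "f \<theta> \<le> (SUP \<theta>\<in>\<Theta>. h \<theta>) + c" using d t by (auto simp: abs_le_iff)
  qed
  have 2: "(SUP \<theta>\<in>\<Theta>. h \<theta>) \<le> (SUP \<theta>\<in>\<Theta>. f \<theta>) + c"
  proof (rule cSUP_least[OF ne])
    fix \<theta> assume t: "\<theta> \<in> \<Theta>"
    have "f \<theta> \<le> (SUP \<theta>\<in>\<Theta>. f \<theta>)" by (rule cSUP_upper[OF t bf])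
    then show "h \<theta> \<le> (SUP \<theta>\<in>\<Theta>. f \<theta>) + c" using d t by (auto simp: abs_le_iff)
  qed
  from 1 2 show ?thesis by (simp add: abs_le_iff)
qed

lemma ravg_diff:
  assumes "finite I" "\<And>S. S \<subseteq> I \<Longrightarrow> \<bar>F (rsig I S) - G (rsig I S)\<bar> \<le> c"
  shows "\<bar>ravg I F - ravg I G\<bar> \<le> c"
proof -
  have "ravg I F - ravg I G = ravg I (\<lambda>\<sigma>. F \<sigma> - G \<sigma>)"
    unfolding ravg_def by (simp add: sum_subtractf diff_divide_distrib)
  also have "\<bar>\<dots>\<bar> \<le> c" by (rule ravg_abs[OF assms(1)]) (use assms(2) in auto)
  finally show ?thesis .
qed

lemma sum_rsig_bound:
  fixes f :: "'i \<Rightarrow> real"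
  assumes "finite I" "\<And>i. 0 \<le> f i" "\<And>i. f i \<le> B"
  shows "\<bar>\<Sum>i\<in>I. rsig I S i * f i\<bar> \<le> real (card I) * B"
proof -
  have B0: "0 \<le> B" using assms(2,3) order_trans by blast
  have "\<bar>\<Sum>i\<in>I. rsig I S i * f i\<bar> \<le> (\<Sum>i\<in>I. B)"
  proof (intro order.trans[OF sum_abs] sum_mono)
    fix i
    have "\<bar>rsig I S i\<bar> * \<bar>f i\<bar> \<le> 1 * B"
      by (rule mult_mono[OF rsig_abs]) (use assms B0 in auto)
    then show "\<bar>rsig I S i * f i\<bar> \<le> B" by (simp add: abs_mult)
  qed
  then show ?thesis by simp
qed

context product_prob_space
begin

lemma gen_facts:
  fixes g :: "'h \<Rightarrow> 'i \<Rightarrow> 'a \<Rightarrow> real"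
  assumes fin: "finite I" and cnt: "countable \<Theta>" and ne: "\<Theta> \<noteq> {}"
    and gm: "\<And>\<theta> i. i \<in> I \<Longrightarrow> g \<theta> i \<in> borel_measurable (M i)"
    and g0: "\<And>\<theta> i p. 0 \<le> g \<theta> i p" and gB: "\<And>\<theta> i p. g \<theta> i p \<le> B"
  shows "phiS I M \<Theta> g \<in> borel_measurable (PiM I M)"
    and "radS I \<Theta> g \<in> borel_measurable (PiM I M)"
    and "\<And>z. \<bar>phiS I M \<Theta> g z\<bar> \<le> real (card I) * B"
    and "\<And>z. \<bar>radS I \<Theta> g z\<bar> \<le> real (card I) * B"
    and "\<And>x i y. i \<in> I \<Longrightarrow> \<bar>phiS I M \<Theta> g x - phiS I M \<Theta> g (x(i:=y))\<bar> \<le> B"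
    and "\<And>x i y. i \<in> I \<Longrightarrow> \<bar>radS I \<Theta> g x - radS I \<Theta> g (x(i:=y))\<bar> \<le> B"
proof -
  let ?P = "PiM I M"
  define n where "n = real (card I)"
  have B0: "B \<ge> 0" using g0 gB by (meson order_trans)
  have comp: "(\<lambda>z. g \<theta> i (z i)) \<in> borel_measurable ?P" if "i \<in> I" for \<theta> i
    using measurable_comp[OF measurable_component_singleton[OF that, of M] gm[OF that]] by (simp add: comp_def)
  have em: "(\<lambda>z. empf I g z \<theta>) \<in> borel_measurable ?P" for \<theta>
    unfolding empf_def by (intro borel_measurable_sum comp)
  have eb0: "0 \<le> empf I g z \<theta>" for z \<theta> unfolding empf_def by (intro sum_nonneg g0)
  have ebB: "empf I g z \<theta> \<le> n * B" for z \<theta>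
    unfolding empf_def n_def using sum_bounded_above[of I "\<lambda>i. g \<theta> i (z i)" B] gB by simp
  have eint: "integrable ?P (\<lambda>z. empf I g z \<theta>)" for \<theta>
    by (rule P.integrable_const_bound[where B="n*B"]) (use eb0 ebB em in auto)
  define E where "E \<theta> = (\<integral>z'. empf I g z' \<theta> \<partial>?P)" for \<theta>
  have E0: "0 \<le> E \<theta>" for \<theta> unfolding E_def by (intro integral_nonneg_AE AE_I2 eb0)
  have EB: "E \<theta> \<le> n * B" for \<theta>
  proof -
    have "E \<theta> \<le> (\<integral>z'. n * B \<partial>?P)" unfolding E_def by (rule integral_mono[OF eint]) (use ebB in auto)
    then show ?thesis by (simp add: P.prob_space)
  qed
  have Eb: "\<bar>E \<theta> - empf I g z \<theta>\<bar> \<le> n * B" for \<theta> z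
    using E0 EB eb0 ebB by (blast intro: absdiff)
  show "phiS I M \<Theta> g \<in> borel_measurable ?P"
  proof -
    have "(\<lambda>z. SUP \<theta>\<in>\<Theta>. E \<theta> - empf I g z \<theta>) \<in> borel_measurable ?P"
    proof (rule sup_meas[OF cnt, where C="n*B"])
      fix \<theta> show "(\<lambda>z. E \<theta> - empf I g z \<theta>) \<in> borel_measurable ?P" using em by simp
    qed (use Eb in auto)
    then show ?thesis unfolding phiS_def[abs_def] E_def by simp
  qed
  show phib: "\<bar>phiS I M \<Theta> g z\<bar> \<le> real (card I) * B" for z
    unfolding phiS_def E_def[symmetric] n_def[symmetric] by (rule sup_bound[OF ne]) (use Eb in auto)
  have sb: "\<bar>\<Sum>i\<in>I. rsig I S i * g \<theta> i (z i)\<bar> \<le> n * B" for S \<theta> z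
    unfolding n_def by (rule sum_rsig_bound[OF fin]) (auto intro: g0 gB)
  show "radS I \<Theta> g \<in> borel_measurable ?P"
  proof -
    have "(\<lambda>z. ravg I (\<lambda>\<sigma>. SUP \<theta>\<in>\<Theta>. \<Sum>i\<in>I. \<sigma> i * g \<theta> i (z i))) \<in> borel_measurable ?P"
    proof (rule ravg_meas)
      fix S assume "S \<subseteq> I"
      show "(\<lambda>z. SUP \<theta>\<in>\<Theta>. \<Sum>i\<in>I. rsig I S i * g \<theta> i (z i)) \<in> borel_measurable ?P"
      proof (rule sup_meas[OF cnt, where C="n*B"])
        fix \<theta> show "(\<lambda>z. \<Sum>i\<in>I. rsig I S i * g \<theta> i (z i)) \<in> borel_measurable ?P"
          by (intro borel_measurable_sum borel_measurable_times borel_measurable_const comp)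
      qed (use sb in auto)
    qed
    then show ?thesis unfolding radS_def[abs_def] .
  qed
  show "\<bar>radS I \<Theta> g z\<bar> \<le> real (card I) * B" for z
    unfolding radS_def n_def[symmetric]
    by (rule ravg_abs[OF fin], rule sup_bound[OF ne]) (use sb in auto)
  fix x i y assume i: "i \<in> I"
  have ed: "\<bar>empf I g x \<theta> - empf I g (x(i:=y)) \<theta>\<bar> \<le> B" for \<theta>
  proof -
    have "empf I g x \<theta> - empf I g (x(i:=y)) \<theta> = g \<theta> i (x i) - g \<theta> i y"
    proof -
      have "empf I g x \<theta> = g \<theta> i (x i) + (\<Sum>j\<in>I-{i}. g \<theta> j (x j))"
        unfolding empf_def using fin i by (simp add: sum.remove)
      moreover have "empf I g (x(i:=y)) \<theta> = g \<theta> i y + (\<Sum>j\<in>I-{i}. g \<theta> j (x j))"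
        unfolding empf_def using fin i by (simp add: sum.remove)
      ultimately show ?thesis by simp
    qed
    then show ?thesis by (simp add: absdiff g0 gB)
  qed
  show "\<bar>phiS I M \<Theta> g x - phiS I M \<Theta> g (x(i:=y))\<bar> \<le> B"
    unfolding phiS_def E_def[symmetric]
    by (rule sup_diff[OF ne, where C="n*B"]) (use Eb ed in \<open>auto simp: abs_minus_commute\<close>)
  show "\<bar>radS I \<Theta> g x - radS I \<Theta> g (x(i:=y))\<bar> \<le> B"
    unfolding radS_def
  proof (rule ravg_diff[OF fin], rule sup_diff[OF ne, where C="n*B"])
    fix S
    show "\<forall>\<theta>\<in>\<Theta>. \<bar>(\<Sum>j\<in>I. rsig I S j * g \<theta> j (x j)) - (\<Sum>j\<in>I. rsig I S j * g \<theta> j ((x(i:=y)) j))\<bar> \<le> B"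
    proof
      fix \<theta>
      have "(\<Sum>j\<in>I. rsig I S j * g \<theta> j (x j)) - (\<Sum>j\<in>I. rsig I S j * g \<theta> j ((x(i:=y)) j))
          = rsig I S i * (g \<theta> i (x i) - g \<theta> i y)"
      proof -
        have "(\<Sum>j\<in>I. rsig I S j * g \<theta> j (x j)) = rsig I S i * g \<theta> i (x i) + (\<Sum>j\<in>I-{i}. rsig I S j * g \<theta> j (x j))"
          using fin i by (simp add: sum.remove)
        moreover have "(\<Sum>j\<in>I. rsig I S j * g \<theta> j ((x(i:=y)) j)) = rsig I S i * g \<theta> i y + (\<Sum>j\<in>I-{i}. rsig I S j * g \<theta> j (x j))"
          using fin i by (simp add: sum.remove)
        ultimately show ?thesis by (simp add: algebra_simps)
      qed
      also have "\<bar>\<dots>\<bar> \<le> 1 * B"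
        unfolding abs_mult by (rule mult_mono[OF rsig_abs]) (auto simp: absdiff g0 gB)
      finally show "\<bar>(\<Sum>j\<in>I. rsig I S j * g \<theta> j (x j)) - (\<Sum>j\<in>I. rsig I S j * g \<theta> j ((x(i:=y)) j))\<bar> \<le> B" by simp
    qed
  qed (use sb in auto)
qed

end


lemma pred_expand: "pred a a0 U t x = (\<Sum>j\<in>UNIV. (a t + a0)$j * (\<Sum>i\<in>UNIV. U$i$j * x$i))"
  by (simp add: pred_def inner_vec_def matrix_vector_mult_def transpose_def)

lemma pred_tendsto:
  fixes \<theta>k :: "'k \<Rightarrow> (nat \<Rightarrow> real^'d) \<times> (real^'d) \<times> (real^'d^'d)"
  assumes "(\<theta>k \<longlongrightarrow> \<theta>) F"
  shows "((\<lambda>k. pred (fst (\<theta>k k)) (fst (snd (\<theta>k k))) (snd (snd (\<theta>k k))) t x) \<longlongrightarrow> pred (fst \<theta>) (fst (snd \<theta>)) (snd (snd \<theta>)) t x) F"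
proof -
  have a: "((\<lambda>k. fst (\<theta>k k)) \<longlongrightarrow> fst \<theta>) F" using assms by (rule tendsto_fst)
  have at: "((\<lambda>k. fst (\<theta>k k) t) \<longlongrightarrow> fst \<theta> t) F"
    by (rule continuous_on_tendsto_compose[OF continuous_on_product_coordinates a]) auto
  have a0: "((\<lambda>k. fst (snd (\<theta>k k))) \<longlongrightarrow> fst (snd \<theta>)) F" using assms by (intro tendsto_fst tendsto_snd)
  have U: "((\<lambda>k. snd (snd (\<theta>k k))) \<longlongrightarrow> snd (snd \<theta>)) F" using assms by (intro tendsto_snd)
  show ?thesis unfolding pred_expand
    by (intro tendsto_intros at a0 U)
qed

lemma pred_cont: "continuous_on UNIV (\<lambda>p. (snd p, pred a a0 U t (fst p)))"
  unfolding pred_expand by (intro continuous_intros)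


lemma adm_lip:
  fixes l :: "real \<Rightarrow> real \<Rightarrow> real"
  assumes "admissible l c {h :: real^'d \<Rightarrow> real. linear h}"
  shows "c \<ge> 0" "\<And>y p q. \<bar>l y p - l y q\<bar> \<le> c * \<bar>p - q\<bar>"
proof -
  show "c \<ge> 0" using assms by (simp add: admissible_def)
  fix y p q
  obtain j :: 'd where True by simp
  have lin: "linear (\<lambda>x::real^'d. r * x $ j)" for r
    by (rule linearI) (simp_all add: algebra_simps)
  have A: "\<forall>h\<in>{h::real^'d\<Rightarrow>real. linear h}. \<forall>h'\<in>{h. linear h}. \<forall>x y. \<bar>l y (h x) - l y (h' x)\<bar> \<le> c * \<bar>h x - h' x\<bar>"
    using assms by (simp add: admissible_def)
  have B: "linear h \<Longrightarrow> linear h' \<Longrightarrow> \<bar>l y (h x) - l y (h' x)\<bar> \<le> c * \<bar>h x - h' x\<bar>" for h h' :: "real^'d \<Rightarrow> real" and x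
    using A by blast
  have "\<bar>l y ((\<lambda>x::real^'d. p * x $ j) (axis j 1)) - l y ((\<lambda>x::real^'d. q * x $ j) (axis j 1))\<bar>
      \<le> c * \<bar>(\<lambda>x::real^'d. p * x $ j) (axis j 1) - (\<lambda>x::real^'d. q * x $ j) (axis j 1)\<bar>"
    by (rule B[OF lin lin])
  then show "\<bar>l y p - l y q\<bar> \<le> c * \<bar>p - q\<bar>" by (simp add: axis_def)
qed

lemma g_meas:
  fixes l :: "real \<Rightarrow> real \<Rightarrow> real"
  assumes "case_prod l \<in> borel_measurable borel" and "sets N = sets (borel :: ((real^'d) \<times> real) measure)"
  shows "(\<lambda>p::(real^'d) \<times> real. l (snd p) (pred a a0 U t (fst p))) \<in> borel_measurable N"
proof -
  have "(\<lambda>p::(real^'d) \<times> real. (snd p, pred a a0 U t (fst p))) \<in> measurable borel borel"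
    by (rule borel_measurable_continuous_onI[OF pred_cont])
  from measurable_comp[OF this assms(1)]
  have "(\<lambda>p::(real^'d) \<times> real. l (snd p) (pred a a0 U t (fst p))) \<in> borel_measurable borel"
    by (simp add: comp_def)
  then show ?thesis by (subst measurable_cong_sets[OF assms(2) refl])
qed

lemma norm_le_norm21:
  fixes a :: "nat \<Rightarrow> real^'d"
  assumes "t < T"
  shows "norm (a t) \<le> norm21 a T"
proof -
  have "norm (a t) \<le> (\<Sum>j\<in>UNIV. \<bar>a t $ j\<bar>)" by (rule norm_le_l1_cart)
  also have "\<dots> \<le> (\<Sum>j\<in>UNIV. sqrt (\<Sum>t<T. (a t $ j)\<^sup>2))"
  proof (rule sum_mono)
    fix j
    have "(a t $ j)\<^sup>2 \<le> (\<Sum>t<T. (a t $ j)\<^sup>2)"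
      using assms by (intro member_le_sum) auto
    then show "\<bar>a t $ j\<bar> \<le> sqrt (\<Sum>t<T. (a t $ j)\<^sup>2)"
      using real_sqrt_le_mono by fastforce
  qed
  finally show ?thesis by (simp add: norm21_def)
qed

lemma pred_bound:
  assumes "feasible T \<gamma> \<beta> a a0 U" "t < T" "\<gamma> > 0" "\<beta> > 0"
  shows "\<bar>pred a a0 U t x\<bar> \<le> (sqrt (real T / \<gamma>) + sqrt (1 / \<beta>)) * norm x"
proof -
  have orth: "transpose U ** U = mat 1" using assms(1) by (simp add: feasible_def)
  have n21: "norm21 a T \<le> sqrt (real T / \<gamma>)"
  proof -
    have n0: "norm21 a T \<ge> 0" unfolding norm21_def by (intro sum_nonneg) (simp add: sum_nonneg)
    have "(norm21 a T)\<^sup>2 \<le> real T / \<gamma>" using assms(1) by (simp add: feasible_def)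
    then show ?thesis using n0 by (simp add: real_le_rsqrt)
  qed
  have na0: "norm a0 \<le> sqrt (1 / \<beta>)"
  proof -
    have "(norm a0)\<^sup>2 \<le> 1 / \<beta>" using assms(1) by (simp add: feasible_def)
    then show ?thesis by (simp add: real_le_rsqrt)
  qed
  have "\<bar>pred a a0 U t x\<bar> \<le> norm (a t + a0) * norm (transpose U *v x)"
    unfolding pred_def by (rule Cauchy_Schwarz_ineq2)
  also have "\<dots> = norm (a t + a0) * norm x" by (simp only: orth_norm[OF orth])
  also have "\<dots> \<le> (norm (a t) + norm a0) * norm x" by (intro mult_right_mono norm_triangle_ineq) auto
  also have "\<dots> \<le> (sqrt (real T / \<gamma>) + sqrt (1 / \<beta>)) * norm x"
    using norm_le_norm21[OF assms(2), of a] n21 na0 by (intro mult_right_mono) auto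
  finally show ?thesis .
qed


lemma rad_lin:
  fixes x :: "nat \<times> nat \<Rightarrow> real^'d"
  assumes g: "\<gamma> > 0" and b: "\<beta> > 0"
  shows "ravg (sample_idx T m) (\<lambda>\<sigma>. sqrt (real T / \<gamma>) * sqrt (\<Sum>t<T. (norm (\<Sum>i<m t. \<sigma> (t,i) *\<^sub>R x (t,i)))\<^sup>2)
       + sqrt (1 / \<beta>) * norm (\<Sum>ti\<in>sample_idx T m. \<sigma> ti *\<^sub>R x ti))
     \<le> (sqrt (real T / \<gamma>) + sqrt (1 / \<beta>)) * sqrt (\<Sum>ti\<in>sample_idx T m. (norm (x ti))\<^sup>2)"
proof -
  let ?I = "sample_idx T m"
  have fin: "finite ?I" by (rule finite_sidx)
  have sq: "(\<Sum>ti\<in>?I. (norm (x ti))\<^sup>2) = (\<Sum>t<T. \<Sum>i<m t. (norm (x (t,i)))\<^sup>2)"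
    unfolding sidx_Sigma by (simp add: sum.Sigma split_def)
  have A: "ravg ?I (\<lambda>\<sigma>. sqrt (\<Sum>t<T. (norm (\<Sum>i<m t. \<sigma> (t,i) *\<^sub>R x (t,i)))\<^sup>2)) \<le> sqrt (\<Sum>ti\<in>?I. (norm (x ti))\<^sup>2)"
  proof -
    have "ravg ?I (\<lambda>\<sigma>. sqrt (\<Sum>t<T. (norm (\<Sum>i<m t. \<sigma> (t,i) *\<^sub>R x (t,i)))\<^sup>2))
        \<le> sqrt (ravg ?I (\<lambda>\<sigma>. \<Sum>t<T. (norm (\<Sum>i<m t. \<sigma> (t,i) *\<^sub>R x (t,i)))\<^sup>2))"
      by (rule ravg_sqrt[OF fin]) (simp add: sum_nonneg)
    also have "ravg ?I (\<lambda>\<sigma>. \<Sum>t<T. (norm (\<Sum>i<m t. \<sigma> (t,i) *\<^sub>R x (t,i)))\<^sup>2) = (\<Sum>t<T. \<Sum>i<m t. (norm (x (t,i)))\<^sup>2)"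
      unfolding ravg_sum
    proof (rule sum.cong[OF refl])
      fix t assume t: "t \<in> {..<T}"
      show "ravg ?I (\<lambda>\<sigma>. (norm (\<Sum>i<m t. \<sigma> (t,i) *\<^sub>R x (t,i)))\<^sup>2) = (\<Sum>i<m t. (norm (x (t,i)))\<^sup>2)"
        using ravg_sq[OF fin, of "{..<m t}" "Pair t" "\<lambda>i. x (t,i)"] t
        by (auto simp: inj_on_def sample_idx_def)
    qed
    finally show ?thesis unfolding sq .
  qed
  have B: "ravg ?I (\<lambda>\<sigma>. norm (\<Sum>ti\<in>?I. \<sigma> ti *\<^sub>R x ti)) \<le> sqrt (\<Sum>ti\<in>?I. (norm (x ti))\<^sup>2)"
  proof -
    have "ravg ?I (\<lambda>\<sigma>. norm (\<Sum>ti\<in>?I. \<sigma> ti *\<^sub>R x ti)) = ravg ?I (\<lambda>\<sigma>. sqrt ((norm (\<Sum>ti\<in>?I. \<sigma> ti *\<^sub>R x ti))\<^sup>2))"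
      by simp
    also have "\<dots> \<le> sqrt (ravg ?I (\<lambda>\<sigma>. (norm (\<Sum>ti\<in>?I. \<sigma> ti *\<^sub>R x ti))\<^sup>2))"
      by (rule ravg_sqrt[OF fin]) simp
    also have "ravg ?I (\<lambda>\<sigma>. (norm (\<Sum>ti\<in>?I. \<sigma> ti *\<^sub>R x ti))\<^sup>2) = (\<Sum>ti\<in>?I. (norm (x ti))\<^sup>2)"
      using ravg_sq[OF fin fin, of "\<lambda>j. j" x] by simp
    finally show ?thesis .
  qed
  have "ravg ?I (\<lambda>\<sigma>. sqrt (real T / \<gamma>) * sqrt (\<Sum>t<T. (norm (\<Sum>i<m t. \<sigma> (t,i) *\<^sub>R x (t,i)))\<^sup>2)
       + sqrt (1 / \<beta>) * norm (\<Sum>ti\<in>?I. \<sigma> ti *\<^sub>R x ti))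
      = sqrt (real T / \<gamma>) * ravg ?I (\<lambda>\<sigma>. sqrt (\<Sum>t<T. (norm (\<Sum>i<m t. \<sigma> (t,i) *\<^sub>R x (t,i)))\<^sup>2))
        + sqrt (1 / \<beta>) * ravg ?I (\<lambda>\<sigma>. norm (\<Sum>ti\<in>?I. \<sigma> ti *\<^sub>R x ti))"
    by (simp add: ravg_add ravg_cmult)
  also have "\<dots> \<le> sqrt (real T / \<gamma>) * sqrt (\<Sum>ti\<in>?I. (norm (x ti))\<^sup>2) + sqrt (1 / \<beta>) * sqrt (\<Sum>ti\<in>?I. (norm (x ti))\<^sup>2)"
    using g b by (intro add_mono mult_left_mono A B) auto
  finally show ?thesis by (simp add: algebra_simps)
qed


lemma rad_bound:
  fixes z :: "nat \<times> nat \<Rightarrow> (real^'d) \<times> real" and \<Theta> :: "((nat \<Rightarrow> real^'d) \<times> (real^'d) \<times> (real^'d^'d)) set"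
    and l :: "real \<Rightarrow> real \<Rightarrow> real"
  assumes ne: "\<Theta> \<noteq> {}" and sub: "\<forall>\<theta>\<in>\<Theta>. feasible T \<gamma> \<beta> (fst \<theta>) (fst (snd \<theta>)) (snd (snd \<theta>))"
    and g: "\<gamma> > 0" and b: "\<beta> > 0" and c: "c \<ge> 0" and lip: "\<And>y p q. \<bar>l y p - l y q\<bar> \<le> c * \<bar>p - q\<bar>"
  shows "radS (sample_idx T m) \<Theta> (\<lambda>\<theta> ti p. l (snd p) (pred (fst \<theta>) (fst (snd \<theta>)) (snd (snd \<theta>)) (fst ti) (fst p))) z
     \<le> c * ((sqrt (real T / \<gamma>) + sqrt (1 / \<beta>)) * sqrt (\<Sum>ti\<in>sample_idx T m. (norm (fst (z ti)))\<^sup>2))"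
proof -
  let ?I = "sample_idx T m"
  define K where "K = sqrt (real T / \<gamma>) + sqrt (1 / \<beta>)"
  have fin: "finite ?I" by (rule finite_sidx)
  define h where "h \<theta> ti = pred (fst \<theta>) (fst (snd \<theta>)) (snd (snd \<theta>)) (fst ti) (fst (z ti))" for \<theta> :: "(nat \<Rightarrow> real^'d) \<times> (real^'d) \<times> (real^'d^'d)" and ti
  define \<phi> where "\<phi> ti = l (snd (z ti))" for ti
  define LB where "LB \<sigma> = sqrt (real T / \<gamma>) * sqrt (\<Sum>t<T. (norm (\<Sum>i<m t. \<sigma> (t,i) *\<^sub>R fst (z (t,i))))\<^sup>2)
       + sqrt (1 / \<beta>) * norm (\<Sum>ti\<in>?I. \<sigma> ti *\<^sub>R fst (z ti))" for \<sigma> :: "nat \<times> nat \<Rightarrow> real"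
  have hH: "\<forall>\<theta>\<in>\<Theta>. \<forall>ti\<in>?I. \<bar>h \<theta> ti\<bar> \<le> K * (\<Sum>tj\<in>?I. norm (fst (z tj)))"
  proof (intro ballI)
    fix \<theta> ti assume th: "\<theta> \<in> \<Theta>" and ti: "ti \<in> ?I"
    have "fst ti < T" using ti by (auto simp: sample_idx_def)
    then have "\<bar>h \<theta> ti\<bar> \<le> K * norm (fst (z ti))"
      unfolding h_def K_def using pred_bound[OF sub[rule_format, OF th] _ g b] by blast
    also have "\<dots> \<le> K * (\<Sum>tj\<in>?I. norm (fst (z tj)))"
      using fin ti g b by (intro mult_left_mono member_le_sum) (auto simp: K_def)
    finally show "\<bar>h \<theta> ti\<bar> \<le> K * (\<Sum>tj\<in>?I. norm (fst (z tj)))" .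
  qed
  have "radS ?I \<Theta> (\<lambda>\<theta> ti p. l (snd p) (pred (fst \<theta>) (fst (snd \<theta>)) (snd (snd \<theta>)) (fst ti) (fst p))) z
      = ravg ?I (\<lambda>\<sigma>. SUP \<theta>\<in>\<Theta>. (\<lambda>_. 0) \<theta> + (\<Sum>ti\<in>?I. \<sigma> ti * \<phi> ti (h \<theta> ti)))"
    unfolding radS_def h_def \<phi>_def by simp
  also have "\<dots> \<le> ravg ?I (\<lambda>\<sigma>. SUP \<theta>\<in>\<Theta>. (\<lambda>_. 0) \<theta> + (\<Sum>ti\<in>?I. \<sigma> ti * (c * h \<theta> ti)))"
    by (rule contraction[OF fin ne hH c, where A=0]) (auto simp: \<phi>_def lip)
  also have "\<dots> \<le> ravg ?I (\<lambda>\<sigma>. c * LB \<sigma>)"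
  proof (rule ravg_mono, rule cSUP_least[OF ne])
    fix \<sigma> \<theta> assume th: "\<theta> \<in> \<Theta>"
    have "(\<Sum>ti\<in>?I. \<sigma> ti * (c * h \<theta> ti)) = c * (\<Sum>ti\<in>?I. \<sigma> ti * pred (fst \<theta>) (fst (snd \<theta>)) (snd (snd \<theta>)) (fst ti) (fst (z ti)))"
      unfolding h_def by (simp add: sum_distrib_left algebra_simps)
    also have "\<dots> \<le> c * LB \<sigma>"
      unfolding LB_def by (intro mult_left_mono lin_bound[OF sub[rule_format, OF th] g b] c)
    finally show "(\<lambda>_. 0) \<theta> + (\<Sum>ti\<in>?I. \<sigma> ti * (c * h \<theta> ti)) \<le> c * LB \<sigma>" by simp
  qed
  also have "\<dots> = c * ravg ?I LB" by (rule ravg_cmult)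
  also have "\<dots> \<le> c * (K * sqrt (\<Sum>ti\<in>?I. (norm (fst (z ti)))\<^sup>2))"
    unfolding LB_def K_def by (intro mult_left_mono c rad_lin[OF g b])
  finally show ?thesis unfolding K_def .
qed


lemma lip_tendsto:
  fixes f :: "real \<Rightarrow> real"
  assumes lip: "\<And>p q. \<bar>f p - f q\<bar> \<le> c * \<bar>p - q\<bar>" and X: "(X \<longlongrightarrow> x) F"
  shows "((\<lambda>k. f (X k)) \<longlongrightarrow> f x) F"
proof -
  have "((\<lambda>k. X k - x) \<longlongrightarrow> 0) F" using X by (simp add: LIM_zero_iff)
  then have "((\<lambda>k. c * \<bar>X k - x\<bar>) \<longlongrightarrow> 0) F" by (intro tendsto_mult_right_zero tendsto_rabs_zero)
  then have "((\<lambda>k. f (X k) - f x) \<longlongrightarrow> 0) F"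
    by (rule Lim_null_comparison[rotated]) (use lip in \<open>auto intro: always_eventually\<close>)
  then show ?thesis by (simp add: LIM_zero_iff)
qed

lemma approx:
  fixes \<Theta>0 \<Theta>a :: "((nat \<Rightarrow> real^'d) \<times> (real^'d) \<times> (real^'d^'d)) set"
    and M :: "nat \<times> nat \<Rightarrow> ((real^'d) \<times> real) measure" and l :: "real \<Rightarrow> real \<Rightarrow> real"
  assumes pps: "product_prob_space M" and cl: "\<Theta>a \<subseteq> closure \<Theta>0"
    and lip: "\<And>y p q. \<bar>l y p - l y q\<bar> \<le> c * \<bar>p - q\<bar>"
    and l0: "\<And>y p. 0 \<le> l y p" and lB: "\<And>y p. l y p \<le> B"
    and lm: "case_prod l \<in> borel_measurable borel"
    and Ms: "\<And>ti. sets (M ti) = sets (borel :: ((real^'d) \<times> real) measure)"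
    and th: "\<theta> \<in> \<Theta>a"
  defines "g \<equiv> (\<lambda>\<theta> ti p. l (snd p) (pred (fst \<theta>) (fst (snd \<theta>)) (snd (snd \<theta>)) (fst ti) (fst p)))"
  shows "(\<integral>z'. empf (sample_idx T m) g z' \<theta> \<partial>PiM (sample_idx T m) M) - empf (sample_idx T m) g z \<theta>
     \<le> phiS (sample_idx T m) M \<Theta>0 g z"
proof -
  interpret product_prob_space M "sample_idx T m" by (rule pps)
  let ?I = "sample_idx T m" and ?P = "PiM (sample_idx T m) M"
  define n where "n = real (card ?I)"
  have fin: "finite ?I" by (rule finite_sidx)
  obtain \<theta>k where tk: "\<And>k. \<theta>k k \<in> \<Theta>0" and conv: "\<theta>k \<longlonglongrightarrow> \<theta>"
    using cl th closure_sequential[of \<theta> \<Theta>0] by blast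
  have ne: "\<Theta>0 \<noteq> {}" using tk by blast
  have eb0: "0 \<le> empf ?I g z \<theta>" for z \<theta> unfolding empf_def g_def by (intro sum_nonneg l0)
  have ebB: "empf ?I g z \<theta> \<le> n * B" for z \<theta>
    unfolding empf_def n_def g_def using sum_bounded_above[of ?I _ B] lB by simp
  have gm: "g \<theta> ti \<in> borel_measurable (M ti)" for \<theta> ti
    unfolding g_def by (rule g_meas[OF lm Ms])
  have comp: "(\<lambda>z. g \<theta> i (z i)) \<in> borel_measurable ?P" if "i \<in> ?I" for \<theta> i
    using measurable_comp[OF measurable_component_singleton[OF that, of M] gm] by (simp add: comp_def)
  have em: "(\<lambda>z. empf ?I g z \<theta>) \<in> borel_measurable ?P" for \<theta>
    unfolding empf_def by (intro borel_measurable_sum comp)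
  have eint: "integrable ?P (\<lambda>z. empf ?I g z \<theta>)" for \<theta>
    by (rule P.integrable_const_bound[where B="n*B"]) (use eb0 ebB em in auto)
  define E where "E \<theta> = (\<integral>z'. empf ?I g z' \<theta> \<partial>?P)" for \<theta>
  have E0: "0 \<le> E \<theta>" for \<theta> unfolding E_def by (intro integral_nonneg_AE AE_I2 eb0)
  have EB: "E \<theta> \<le> n * B" for \<theta>
  proof -
    have "E \<theta> \<le> (\<integral>z'. n * B \<partial>?P)" unfolding E_def by (rule integral_mono[OF eint]) (use ebB in auto)
    then show ?thesis by (simp add: P.prob_space)
  qed
  have Eb: "\<bar>E \<theta> - empf ?I g z \<theta>\<bar> \<le> n * B" for \<theta> z
    using E0 EB eb0 ebB by (blast intro: absdiff)
  have bdd: "bdd_above ((\<lambda>\<theta>. E \<theta> - empf ?I g z \<theta>) ` \<Theta>0)"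
    by (rule bdd_aboveI[where M="n*B"]) (use Eb in \<open>auto simp: abs_le_iff\<close>)
  have le: "E (\<theta>k k) - empf ?I g z (\<theta>k k) \<le> phiS ?I M \<Theta>0 g z" for k
    unfolding phiS_def E_def[symmetric] by (rule cSUP_upper[OF tk bdd])
  have econv: "(\<lambda>k. empf ?I g z' (\<theta>k k)) \<longlonglongrightarrow> empf ?I g z' \<theta>" for z'
    unfolding empf_def g_def
    by (intro tendsto_sum lip_tendsto[OF lip] pred_tendsto[OF conv])
  have Econv: "(\<lambda>k. E (\<theta>k k)) \<longlonglongrightarrow> E \<theta>"
    unfolding E_def
  proof (rule integral_dominated_convergence[where w="\<lambda>_. n * B"])
    show "(\<lambda>z'. empf ?I g z' \<theta>) \<in> borel_measurable ?P" by (rule em)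
    show "\<And>k. (\<lambda>z'. empf ?I g z' (\<theta>k k)) \<in> borel_measurable ?P" by (rule em)
    show "integrable ?P (\<lambda>_. n * B)" by simp
    show "AE z' in ?P. (\<lambda>k. empf ?I g z' (\<theta>k k)) \<longlonglongrightarrow> empf ?I g z' \<theta>" by (intro AE_I2 econv)
    show "\<And>k. AE z' in ?P. norm (empf ?I g z' (\<theta>k k)) \<le> n * B"
      using eb0 ebB by (intro AE_I2) auto
  qed
  have "(\<lambda>k. E (\<theta>k k) - empf ?I g z (\<theta>k k)) \<longlonglongrightarrow> E \<theta> - empf ?I g z \<theta>"
    by (intro tendsto_diff Econv econv)
  then have "E \<theta> - empf ?I g z \<theta> \<le> phiS ?I M \<Theta>0 g z"
    by (rule LIMSEQ_le_const2) (use le in auto)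
  then show ?thesis unfolding E_def .
qed


lemma core:
  fixes D :: "nat \<Rightarrow> ((real^'d) \<times> real) measure"
    and m :: "nat \<Rightarrow> nat" and T :: nat
    and l :: "real \<Rightarrow> real \<Rightarrow> real"
    and B c \<gamma> \<beta> \<delta> :: real
  assumes T_pos: "T \<ge> 1"
    and m_pos: "\<forall>t<T. m t \<ge> 1"
    and gamma: "\<gamma> > 0" and beta: "\<beta> > 0" and delta: "\<delta> > 0" and d1: "\<delta> < 1"
    and D_prob: "\<forall>t<T. prob_space (D t)"
    and D_sets: "\<forall>t<T. sets (D t) = sets (borel :: ((real^'d) \<times> real) measure)"
    and l_meas: "case_prod l \<in> borel_measurable borel"
    and l_bounded: "\<forall>y p. 0 \<le> l y p \<and> l y p \<le> B"
    and l_adm: "admissible l c {h :: real^'d \<Rightarrow> real. linear h}"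
  shows "\<exists>E\<in>sets (sample_measure D T m). measure (sample_measure D T m) E \<ge> 1 - \<delta> \<and>
       (\<forall>z\<in>E. \<forall>a a0 U. optimal l T m \<gamma> \<beta> z a a0 U \<longrightarrow>
          (\<integral>z'. emp_loss l T m z' a a0 U \<partial>(sample_measure D T m)) - emp_loss l T m z a a0 U
          \<le> 2 * c * (sqrt (real T / \<gamma>) + sqrt (1 / \<beta>)) * sqrt (\<Sum>ti\<in>sample_idx T m. (norm (fst (z ti)))\<^sup>2)
            + 3 * B * sqrt ((\<Sum>t<T. real (m t)) * ln (2 / \<delta>) / 2))"
proof -
  let ?I = "sample_idx T m"
  define D' where "D' t = (if t < T then D t else return (borel :: ((real^'d) \<times> real) measure) (0,0))" for t
  define M' where "M' ti = D' (fst ti)" for ti :: "nat \<times> nat"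
  have Dp: "prob_space (D' t)" for t
    using D_prob by (auto simp: D'_def intro: prob_space_return)
  have Ds: "sets (D' t) = sets (borel :: ((real^'d) \<times> real) measure)" for t
    using D_sets by (auto simp: D'_def)
  have Ms: "sets (M' ti) = sets (borel :: ((real^'d) \<times> real) measure)" for ti
    by (simp add: M'_def Ds)
  have pps: "product_prob_space M'" by (intro product_prob_spaceI) (simp add: M'_def Dp)
  interpret product_prob_space M' ?I by (rule pps)
  have PM: "sample_measure D T m = PiM ?I M'"
    unfolding sample_measure_def by (rule PiM_cong) (auto simp: M'_def D'_def sample_idx_def)
  have fin: "finite ?I" by (rule finite_sidx)
  define n where "n = real (card ?I)"
  have nsum: "n = (\<Sum>t<T. real (m t))"
    unfolding n_def sidx_Sigma by (simp add: card_SigmaI)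
  have n1: "n \<ge> 1"
  proof -
    have "real (m 0) \<le> (\<Sum>t<T. real (m t))" using T_pos by (intro member_le_sum) auto
    then show ?thesis using m_pos T_pos nsum by force
  qed
  define \<Theta>a where "\<Theta>a = {\<theta> :: (nat \<Rightarrow> real^'d) \<times> (real^'d) \<times> (real^'d^'d). feasible T \<gamma> \<beta> (fst \<theta>) (fst (snd \<theta>)) (snd (snd \<theta>))}"
  obtain \<Theta>0 where cnt: "countable \<Theta>0" and sub0: "\<Theta>0 \<subseteq> \<Theta>a" and cl: "\<Theta>a \<subseteq> closure \<Theta>0"
    using separable by blast
  have "((\<lambda>_. 0), 0, mat 1) \<in> \<Theta>a"
    using gamma beta by (simp add: \<Theta>a_def feasible_def norm21_def transpose_mat)
  then have ne: "\<Theta>0 \<noteq> {}" using cl by auto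
  define g where "g = (\<lambda>(\<theta> :: (nat \<Rightarrow> real^'d) \<times> (real^'d) \<times> (real^'d^'d)) ti p. l (snd p) (pred (fst \<theta>) (fst (snd \<theta>)) (snd (snd \<theta>)) (fst (ti :: nat \<times> nat)) (fst p)))"
  have c0: "c \<ge> 0" and lip: "\<And>y p q. \<bar>l y p - l y q\<bar> \<le> c * \<bar>p - q\<bar>" using adm_lip[OF l_adm] by auto
  have l0: "\<And>y p. 0 \<le> l y p" and lB: "\<And>y p. l y p \<le> B" using l_bounded by auto
  have B0: "B \<ge> 0" using l0 lB order_trans by blast
  have g0: "\<And>\<theta> i p. 0 \<le> g \<theta> i p" and gB: "\<And>\<theta> i p. g \<theta> i p \<le> B" by (auto simp: g_def l0 lB)
  have gm: "\<And>\<theta> i. i \<in> ?I \<Longrightarrow> g \<theta> i \<in> borel_measurable (M' i)"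
    unfolding g_def by (simp add: g_meas[OF l_meas Ms])
  note gf = gen_facts[where g=g and \<Theta>=\<Theta>0 and B=B, OF fin cnt ne gm g0 gB]
  note symm = symmetrization[where g=g and \<Theta>=\<Theta>0 and B=B, OF fin cnt ne gm g0 gB]
  have emp_eq: "emp_loss l T m z a a0 U = empf ?I g z (a, a0, U)" for z :: "nat \<times> nat \<Rightarrow> (real^'d) \<times> real" and a a0 U
    unfolding emp_loss_def empf_def g_def sidx_Sigma by (simp add: sum.Sigma split_def)
  have phim: "phiS ?I M' \<Theta>0 g \<in> borel_measurable (PiM ?I M')" by (rule gf(1))
  have radm: "radS ?I \<Theta>0 g \<in> borel_measurable (PiM ?I M')" by (rule gf(2))
  have phib: "\<bar>phiS ?I M' \<Theta>0 g z\<bar> \<le> n * B" for z using gf(3) by (simp add: n_def)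
  have radb: "\<bar>radS ?I \<Theta>0 g z\<bar> \<le> n * B" for z using gf(4) by (simp add: n_def)
  define K where "K = sqrt (real T / \<gamma>) + sqrt (1 / \<beta>)"
  have K0: "K \<ge> 0" using gamma beta by (simp add: K_def)
  have key: "(\<integral>z'. emp_loss l T m z' a a0 U \<partial>(sample_measure D T m)) - emp_loss l T m z a a0 U \<le> phiS ?I M' \<Theta>0 g z"
    if "optimal l T m \<gamma> \<beta> z a a0 U" for z :: "nat \<times> nat \<Rightarrow> (real^'d) \<times> real" and a a0 U
  proof -
    have th: "(a, a0, U) \<in> \<Theta>a" using that by (simp add: optimal_def \<Theta>a_def)
    have "(\<integral>z'. empf ?I g z' (a, a0, U) \<partial>PiM ?I M') - empf ?I g z (a, a0, U) \<le> phiS ?I M' \<Theta>0 g z"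
      unfolding g_def by (rule approx[OF pps cl lip l0 lB l_meas Ms th])
    then show ?thesis unfolding PM emp_eq .
  qed
  have radz: "radS ?I \<Theta>0 g z \<le> c * (K * sqrt (\<Sum>ti\<in>?I. (norm (fst (z ti)))\<^sup>2))" for z
    unfolding g_def K_def
    by (rule rad_bound[OF ne _ gamma beta c0 lip]) (use sub0 in \<open>auto simp: \<Theta>a_def\<close>)
  define \<Psi> where "\<Psi> z = phiS ?I M' \<Theta>0 g z - 2 * radS ?I \<Theta>0 g z" for z
  have \<Psi>m: "\<Psi> \<in> borel_measurable (PiM ?I M')" unfolding \<Psi>_def[abs_def] using phim radm by measurable
  have phiint: "integrable (PiM ?I M') (phiS ?I M' \<Theta>0 g)"
    by (rule P.integrable_const_bound[where B="n*B"]) (use phim phib in auto)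
  have radint: "integrable (PiM ?I M') (radS ?I \<Theta>0 g)"
    by (rule P.integrable_const_bound[where B="n*B"]) (use radm radb in auto)
  have E\<Psi>: "(\<integral>z. \<Psi> z \<partial>PiM ?I M') \<le> 0"
  proof -
    have "(\<integral>z. \<Psi> z \<partial>PiM ?I M') = (\<integral>z. phiS ?I M' \<Theta>0 g z \<partial>PiM ?I M') - 2 * (\<integral>z. radS ?I \<Theta>0 g z \<partial>PiM ?I M')"
      unfolding \<Psi>_def using phiint radint by simp
    then show ?thesis using symm by simp
  qed
  have RHS0: "0 \<le> 2 * c * K * sqrt (\<Sum>ti\<in>?I. (norm (fst (z ti)))\<^sup>2)" for z :: "nat \<times> nat \<Rightarrow> (real^'d) \<times> real"
    using c0 K0 by (simp add: sum_nonneg)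
  show ?thesis
  proof (cases "B = 0")
    case True
    show ?thesis
    proof (rule bexI[where x="space (sample_measure D T m)"], intro conjI ballI allI impI)
      show "1 - \<delta> \<le> measure (sample_measure D T m) (space (sample_measure D T m))"
        using delta unfolding PM by (simp add: P.prob_space)
      show "space (sample_measure D T m) \<in> sets (sample_measure D T m)" by simp
      fix z :: "nat \<times> nat \<Rightarrow> (real^'d) \<times> real" and a a0 U assume opt: "optimal l T m \<gamma> \<beta> z a a0 U"
      have "phiS ?I M' \<Theta>0 g z \<le> 0" using phib[of z] True by simp
      then show "(\<integral>z'. emp_loss l T m z' a a0 U \<partial>(sample_measure D T m)) - emp_loss l T m z a a0 U
          \<le> 2 * c * (sqrt (real T / \<gamma>) + sqrt (1 / \<beta>)) * sqrt (\<Sum>ti\<in>?I. (norm (fst (z ti)))\<^sup>2)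
            + 3 * B * sqrt ((\<Sum>t<T. real (m t)) * ln (2 / \<delta>) / 2)"
        using key[OF opt] RHS0[of z] True unfolding K_def by simp
    qed
  next
    case False
    then have Bp: "B > 0" using B0 by simp
    define L where "L = ln (1 / \<delta>)"
    have Lp: "L > 0" unfolding L_def using delta d1 by simp
    define \<epsilon> where "\<epsilon> = 3 * B * sqrt (n * L / 2)"
    have \<epsilon>p: "\<epsilon> > 0" unfolding \<epsilon>_def using Bp Lp n1 by simp
    have Cp: "(\<Sum>i\<in>?I. (3 * B)\<^sup>2) > 0" using Bp n1 by (simp add: n_def)
    have \<Psi>K: "\<forall>x\<in>space (PiM ?I M'). \<bar>\<Psi> x\<bar> \<le> 3 * (n * B)"
    proof
      fix x
      show "\<bar>\<Psi> x\<bar> \<le> 3 * (n * B)" using phib[of x] radb[of x] unfolding \<Psi>_def by (simp add: abs_le_iff)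
    qed
    have \<Psi>d: "\<forall>i\<in>?I. \<forall>x\<in>space (PiM ?I M'). \<forall>y\<in>space (M' i). \<bar>\<Psi> x - \<Psi> (x(i:=y))\<bar> \<le> 3 * B"
    proof (intro ballI)
      fix i x y assume i: "i \<in> ?I"
      have "\<bar>phiS ?I M' \<Theta>0 g x - phiS ?I M' \<Theta>0 g (x(i:=y))\<bar> \<le> B" using gf(5)[OF _ i] by blast
      moreover have "\<bar>radS ?I \<Theta>0 g x - radS ?I \<Theta>0 g (x(i:=y))\<bar> \<le> B" using gf(6)[OF _ i] by blast
      ultimately show "\<bar>\<Psi> x - \<Psi> (x(i:=y))\<bar> \<le> 3 * B" unfolding \<Psi>_def by (simp add: abs_le_iff)
    qed
    have mc: "measure (PiM ?I M') {x\<in>space (PiM ?I M'). \<epsilon> \<le> \<Psi> x - (\<integral>x. \<Psi> x \<partial>PiM ?I M')}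
        \<le> exp (- 2 * \<epsilon>\<^sup>2 / (\<Sum>i\<in>?I. (3 * B)\<^sup>2))"
      by (rule mcdiarmid[OF fin \<epsilon>p Cp \<Psi>m \<Psi>K \<Psi>d])
    have "- 2 * \<epsilon>\<^sup>2 / (\<Sum>i\<in>?I. (3 * B)\<^sup>2) = - L"
    proof -
      have "\<epsilon>\<^sup>2 = 9 * B\<^sup>2 * (n * L / 2)" unfolding \<epsilon>_def using Lp n1
        by (simp add: power_mult_distrib)
      then show ?thesis using Bp n1 by (simp add: n_def[symmetric] field_simps power2_eq_square)
    qed
    then have mc': "measure (PiM ?I M') {x\<in>space (PiM ?I M'). \<epsilon> \<le> \<Psi> x - (\<integral>x. \<Psi> x \<partial>PiM ?I M')} \<le> \<delta>"
      using mc delta unfolding L_def by (simp add: ln_div)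
    define E where "E = {x\<in>space (PiM ?I M'). \<Psi> x - (\<integral>x. \<Psi> x \<partial>PiM ?I M') < \<epsilon>}"
    have bad: "{x\<in>space (PiM ?I M'). \<epsilon> \<le> \<Psi> x - (\<integral>x. \<Psi> x \<partial>PiM ?I M')} \<in> sets (PiM ?I M')"
      using \<Psi>m by measurable
    have Eeq: "E = space (PiM ?I M') - {x\<in>space (PiM ?I M'). \<epsilon> \<le> \<Psi> x - (\<integral>x. \<Psi> x \<partial>PiM ?I M')}"
      unfolding E_def by auto
    have Es: "E \<in> sets (PiM ?I M')" unfolding Eeq using bad by auto
    have Em: "measure (PiM ?I M') E \<ge> 1 - \<delta>"
      unfolding Eeq using P.prob_compl[OF bad] mc' by simp
    have epsle: "\<epsilon> \<le> 3 * B * sqrt ((\<Sum>t<T. real (m t)) * ln (2 / \<delta>) / 2)"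
    proof -
      have "L \<le> ln (2 / \<delta>)" unfolding L_def using delta by (simp add: divide_right_mono)
      then have "n * L / 2 \<le> (\<Sum>t<T. real (m t)) * ln (2 / \<delta>) / 2"
        using n1 nsum by (simp add: mult_left_mono divide_right_mono)
      then show ?thesis unfolding \<epsilon>_def using Bp by (simp add: real_sqrt_le_mono)
    qed
    show ?thesis
    proof (rule bexI[where x=E], intro conjI ballI allI impI)
      show "E \<in> sets (sample_measure D T m)" unfolding PM by (rule Es)
      show "1 - \<delta> \<le> measure (sample_measure D T m) E" unfolding PM by (rule Em)
      fix z :: "nat \<times> nat \<Rightarrow> (real^'d) \<times> real" and a a0 U assume z: "z \<in> E" and opt: "optimal l T m \<gamma> \<beta> z a a0 U"
      have "\<Psi> z < \<epsilon>" using z E\<Psi> unfolding E_def by simp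
      then have "phiS ?I M' \<Theta>0 g z < \<epsilon> + 2 * radS ?I \<Theta>0 g z" unfolding \<Psi>_def by simp
      also have "\<dots> \<le> \<epsilon> + 2 * (c * (K * sqrt (\<Sum>ti\<in>?I. (norm (fst (z ti)))\<^sup>2)))"
        using radz[of z] by simp
      finally have "phiS ?I M' \<Theta>0 g z \<le> 2 * c * K * sqrt (\<Sum>ti\<in>?I. (norm (fst (z ti)))\<^sup>2) + \<epsilon>"
        by (simp add: algebra_simps)
      then show "(\<integral>z'. emp_loss l T m z' a a0 U \<partial>(sample_measure D T m)) - emp_loss l T m z a a0 U
          \<le> 2 * c * (sqrt (real T / \<gamma>) + sqrt (1 / \<beta>)) * sqrt (\<Sum>ti\<in>?I. (norm (fst (z ti)))\<^sup>2)
            + 3 * B * sqrt ((\<Sum>t<T. real (m t)) * ln (2 / \<delta>) / 2)"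
        using key[OF opt] epsle unfolding K_def by simp
    qed
  qed
qed


lemma Sx_eq:
  assumes "\<forall>t<T. m t \<ge> 1"
  shows "(\<Sum>t<T. real (m t) * S_X m z t) = (\<Sum>ti\<in>sample_idx T m. (norm (fst (z ti)))\<^sup>2)"
proof -
  have "(\<Sum>t<T. real (m t) * S_X m z t) = (\<Sum>t<T. \<Sum>i<m t. (norm (fst (z (t,i))))\<^sup>2)"
  proof (rule sum.cong[OF refl])
    fix t assume "t \<in> {..<T}"
    then have "m t \<ge> 1" using assms by auto
    then show "real (m t) * S_X m z t = (\<Sum>i<m t. (norm (fst (z (t,i))))\<^sup>2)"
      by (simp add: S_X_def)
  qed
  also have "\<dots> = (\<Sum>ti\<in>sample_idx T m. (norm (fst (z ti)))\<^sup>2)"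
    unfolding sidx_Sigma by (simp add: sum.Sigma split_def)
  finally show ?thesis .
qed

lemma int_emp:
  fixes D :: "nat \<Rightarrow> ((real^'d) \<times> real) measure" and l :: "real \<Rightarrow> real \<Rightarrow> real"
  assumes D_prob: "\<forall>t<T. prob_space (D t)"
    and D_sets: "\<forall>t<T. sets (D t) = sets (borel :: ((real^'d) \<times> real) measure)"
    and l_meas: "case_prod l \<in> borel_measurable borel"
    and l_bounded: "\<forall>y p. 0 \<le> l y p \<and> l y p \<le> B"
  shows "(\<integral>z'. emp_loss l T m z' a a0 U \<partial>sample_measure D T m)
     = (\<Sum>t<T. real (m t) * (\<integral>p. l (snd p) (pred a a0 U t (fst p)) \<partial>D t))"
proof -
  let ?I = "sample_idx T m" and ?N = "\<lambda>ti::nat \<times> nat. D (fst ti)"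
  let ?S = "PiM ?I ?N"
  define f where "f t p = l (snd p) (pred a a0 U t (fst p))" for t p
  have Np: "\<And>ti. ti \<in> ?I \<Longrightarrow> prob_space (?N ti)" using D_prob by (auto simp: sample_idx_def)
  interpret S: prob_space ?S by (rule prob_space_PiM[OF Np])
  have fm: "f t \<in> borel_measurable (D t)" if "t < T" for t
    unfolding f_def by (rule g_meas[OF l_meas]) (use D_sets that in auto)
  have cm: "(\<lambda>z. f (fst ti) (z ti)) \<in> borel_measurable ?S" if "ti \<in> ?I" for ti
  proof -
    have "fst ti < T" using that by (auto simp: sample_idx_def)
    from measurable_comp[OF measurable_component_singleton[OF that, of ?N] fm[OF this]]
    show ?thesis by (simp add: comp_def)
  qed
  have ci: "integrable ?S (\<lambda>z. f (fst ti) (z ti))" if "ti \<in> ?I" for ti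
    by (rule S.integrable_const_bound[where B=B]) (use cm[OF that] l_bounded in \<open>auto simp: f_def\<close>)
  have each: "(\<integral>z. f (fst ti) (z ti) \<partial>?S) = (\<integral>p. f (fst ti) p \<partial>D (fst ti))" if "ti \<in> ?I" for ti
  proof -
    have "fst ti < T" using that by (auto simp: sample_idx_def)
    have d: "distr ?S (?N ti) (\<lambda>\<omega>. \<omega> ti) = ?N ti" by (rule distr_PiM_component[OF Np that])
    have "(\<integral>p. f (fst ti) p \<partial>D (fst ti)) = (\<integral>p. f (fst ti) p \<partial>distr ?S (?N ti) (\<lambda>\<omega>. \<omega> ti))"
      using d by simp
    also have "\<dots> = (\<integral>z. f (fst ti) (z ti) \<partial>?S)"
      by (rule integral_distr[OF measurable_component_singleton[OF that]]) (use fm[OF \<open>fst ti < T\<close>] in simp)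
    finally show ?thesis ..
  qed
  have ee: "emp_loss l T m z a a0 U = (\<Sum>ti\<in>?I. f (fst ti) (z ti))" for z :: "nat \<times> nat \<Rightarrow> (real^'d) \<times> real"
    unfolding emp_loss_def f_def sidx_Sigma by (simp add: sum.Sigma split_def)
  have "(\<integral>z'. emp_loss l T m z' a a0 U \<partial>sample_measure D T m) = (\<integral>z. (\<Sum>ti\<in>?I. f (fst ti) (z ti)) \<partial>?S)"
    unfolding sample_measure_def ee ..
  also have "\<dots> = (\<Sum>ti\<in>?I. \<integral>z. f (fst ti) (z ti) \<partial>?S)"
    by (rule Bochner_Integration.integral_sum) (rule ci)
  also have "\<dots> = (\<Sum>ti\<in>?I. \<integral>p. f (fst ti) p \<partial>D (fst ti))"
    by (rule sum.cong) (auto simp: each)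
  also have "\<dots> = (\<Sum>t<T. \<Sum>i<m t. \<integral>p. f t p \<partial>D t)"
    unfolding sidx_Sigma by (subst sum.Sigma) (auto simp: split_def)
  also have "\<dots> = (\<Sum>t<T. real (m t) * (\<integral>p. l (snd p) (pred a a0 U t (fst p)) \<partial>D t))"
    by (simp add: f_def)
  finally show ?thesis .
qed


lemma final_arith:
  fixes T mm :: nat and \<gamma> \<beta> c B r L S \<Delta> :: real
  assumes T1: "T \<ge> 1" and m1: "mm \<ge> 1" and g: "\<gamma> > 0" and b: "\<beta> > 0" and c: "c \<ge> 0" and B: "B \<ge> 0"
    and r: "r \<ge> 0" and L: "L > 0" and S0: "S \<ge> 0" and SN: "S \<le> real mm * real T * r\<^sup>2"
    and D: "\<Delta> \<le> 2 * c * (sqrt (real T / \<gamma>) + sqrt (1 / \<beta>)) * sqrt S + 3 * B * sqrt (real mm * real T * L / 2)"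
  shows "\<Delta> / (real T * real mm) \<le> 2 * c * r / sqrt (\<gamma> * real mm) + 2 * c * r / sqrt (\<beta> * real mm * real T)
          + 3 * B * sqrt (L / (2 * real mm * real T))"
proof -
  define a where "a = sqrt (real mm)"
  define bT where "bT = sqrt (real T)"
  define gg where "gg = sqrt \<gamma>"
  define bb where "bb = sqrt \<beta>"
  define ll where "ll = sqrt L"
  define s2 where "s2 = sqrt (2::real)"
  have a: "a > 0" "a\<^sup>2 = real mm" using m1 by (auto simp: a_def)
  have bT: "bT > 0" "bT\<^sup>2 = real T" using T1 by (auto simp: bT_def)
  have gg: "gg > 0" using g by (simp add: gg_def)
  have bb: "bb > 0" using b by (simp add: bb_def)
  have ll: "ll \<ge> 0" using L by (simp add: ll_def)
  have s2: "s2 > 0" by (simp add: s2_def)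
  have K0: "0 \<le> 2 * c * (sqrt (real T / \<gamma>) + sqrt (1 / \<beta>))" using c g b by simp
  have "sqrt S \<le> sqrt (real mm * real T * r\<^sup>2)" using SN by (rule real_sqrt_le_mono)
  also have "\<dots> = a * bT * r" using r by (simp add: a_def bT_def real_sqrt_mult)
  finally have sS: "sqrt S \<le> a * bT * r" .
  have "\<Delta> \<le> 2 * c * (sqrt (real T / \<gamma>) + sqrt (1 / \<beta>)) * (a * bT * r) + 3 * B * sqrt (real mm * real T * L / 2)"
    using D mult_left_mono[OF sS K0] by linarith
  also have "\<dots> = 2 * c * (bT / gg + 1 / bb) * (a * bT * r) + 3 * B * (a * bT * ll / s2)"
    by (simp add: a_def bT_def gg_def bb_def ll_def s2_def real_sqrt_mult real_sqrt_divide)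
  finally have D': "\<Delta> \<le> 2 * c * (bT / gg + 1 / bb) * (a * bT * r) + 3 * B * (a * bT * ll / s2)" .
  have TM: "real T * real mm = (a * bT)\<^sup>2" using a bT by (simp add: power_mult_distrib)
  have "\<Delta> / (real T * real mm) \<le> (2 * c * (bT / gg + 1 / bb) * (a * bT * r) + 3 * B * (a * bT * ll / s2)) / (a * bT)\<^sup>2"
    unfolding TM using D' a bT by (intro divide_right_mono) auto
  also have "\<dots> = 2 * c * r / (gg * a) + 2 * c * r / (bb * a * bT) + 3 * B * (ll / (s2 * a * bT))"
    using a(1) bT(1) gg bb s2 by (simp add: field_simps power2_eq_square)
  also have "\<dots> = 2 * c * r / sqrt (\<gamma> * real mm) + 2 * c * r / sqrt (\<beta> * real mm * real T)
          + 3 * B * sqrt (L / (2 * real mm * real T))"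
    by (simp add: a_def bT_def gg_def bb_def ll_def s2_def real_sqrt_mult real_sqrt_divide mult_ac)
  finally show ?thesis .
qed

theorem theorem2:
  fixes D :: "nat \<Rightarrow> ((real^'d) \<times> real) measure"
    and m :: "nat \<Rightarrow> nat" and T :: nat
    and l :: "real \<Rightarrow> real \<Rightarrow> real"
    and B c \<gamma> \<beta> \<delta> :: real
  assumes T_pos: "T \<ge> 1"
    and m_pos: "\<forall>t<T. m t \<ge> 1"
    and gamma: "\<gamma> > 0" and beta: "\<beta> > 0" and delta: "\<delta> > 0"
    and D_prob: "\<forall>t<T. prob_space (D t)"
    and D_sets: "\<forall>t<T. sets (D t) = sets (borel :: ((real^'d) \<times> real) measure)"
    and l_meas: "case_prod l \<in> borel_measurable borel"
    and l_bounded: "\<forall>y p. 0 \<le> l y p \<and> l y p \<le> B"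
    and l_adm: "admissible l c {h :: real^'d \<Rightarrow> real. linear h}"
  shows
    "(\<exists>E\<in>sets (sample_measure D T m). measure (sample_measure D T m) E \<ge> 1 - \<delta> \<and>
       (\<forall>z\<in>E. \<forall>a a0 U. optimal l T m \<gamma> \<beta> z a a0 U \<longrightarrow>
          (\<integral>z'. emp_loss l T m z' a a0 U \<partial>(sample_measure D T m)) - emp_loss l T m z a a0 U
          \<le> 2 * c * (sqrt (real T / \<gamma>) + sqrt (1 / \<beta>)) * sqrt (\<Sum>t<T. real (m t) * S_X m z t)
            + 3 * B * sqrt ((\<Sum>t<T. real (m t)) * ln (2 / \<delta>) / 2))) \<and>
     (\<forall>(mm::nat) (r::real). (\<forall>t<T. m t = mm) \<and> (\<forall>t<T. AE p in D t. norm (fst p) \<le> r) \<longrightarrow>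
       (\<exists>E\<in>sets (sample_measure D T m). measure (sample_measure D T m) E \<ge> 1 - \<delta> \<and>
         (\<forall>z\<in>E. \<forall>a a0 U. optimal l T m \<gamma> \<beta> z a a0 U \<longrightarrow>
            (1 / real T) * (\<Sum>t<T. \<integral>p. l (snd p) (pred a a0 U t (fst p)) \<partial>(D t))
            - (1 / real T) * (\<Sum>t<T. (1 / real mm) * (\<Sum>i<mm. l (snd (z (t,i))) (pred a a0 U t (fst (z (t,i))))))
            \<le> 2 * c * r / sqrt (\<gamma> * real mm) + 2 * c * r / sqrt (\<beta> * real mm * real T)
              + 3 * B * sqrt (ln (2 / \<delta>) / (2 * real mm * real T)))))"
proof -
  let ?SM = "sample_measure D T m" and ?I = "sample_idx T m"
  have P1: "\<exists>E\<in>sets ?SM. measure ?SM E \<ge> 1 - \<delta> \<and>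
       (\<forall>z\<in>E. \<forall>a a0 U. optimal l T m \<gamma> \<beta> z a a0 U \<longrightarrow>
          (\<integral>z'. emp_loss l T m z' a a0 U \<partial>?SM) - emp_loss l T m z a a0 U
          \<le> 2 * c * (sqrt (real T / \<gamma>) + sqrt (1 / \<beta>)) * sqrt (\<Sum>t<T. real (m t) * S_X m z t)
            + 3 * B * sqrt ((\<Sum>t<T. real (m t)) * ln (2 / \<delta>) / 2))"
  proof (cases "\<delta> < 1")
    case True
    show ?thesis
      using core[OF T_pos m_pos gamma beta delta True D_prob D_sets l_meas l_bounded l_adm]
      unfolding Sx_eq[OF m_pos] .
  next
    case False
    then show ?thesis by (intro bexI[where x="{}"]) auto
  qed
  have P2: "\<forall>(mm::nat) (r::real). (\<forall>t<T. m t = mm) \<and> (\<forall>t<T. AE p in D t. norm (fst p) \<le> r) \<longrightarrow>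
       (\<exists>E\<in>sets ?SM. measure ?SM E \<ge> 1 - \<delta> \<and>
         (\<forall>z\<in>E. \<forall>a a0 U. optimal l T m \<gamma> \<beta> z a a0 U \<longrightarrow>
            (1 / real T) * (\<Sum>t<T. \<integral>p. l (snd p) (pred a a0 U t (fst p)) \<partial>(D t))
            - (1 / real T) * (\<Sum>t<T. (1 / real mm) * (\<Sum>i<mm. l (snd (z (t,i))) (pred a a0 U t (fst (z (t,i))))))
            \<le> 2 * c * r / sqrt (\<gamma> * real mm) + 2 * c * r / sqrt (\<beta> * real mm * real T)
              + 3 * B * sqrt (ln (2 / \<delta>) / (2 * real mm * real T))))"
  proof (intro allI impI)
    fix mm :: nat and r :: real
    assume H: "(\<forall>t<T. m t = mm) \<and> (\<forall>t<T. AE p in D t. norm (fst p) \<le> r)"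
    have mm: "\<And>t. t < T \<Longrightarrow> m t = mm" using H by auto
    have AEr: "\<And>t. t < T \<Longrightarrow> AE p in D t. norm (fst p) \<le> r" using H by auto
    have mm1: "mm \<ge> 1" using mm[of 0] m_pos T_pos by force
    show "\<exists>E\<in>sets ?SM. measure ?SM E \<ge> 1 - \<delta> \<and>
         (\<forall>z\<in>E. \<forall>a a0 U. optimal l T m \<gamma> \<beta> z a a0 U \<longrightarrow>
            (1 / real T) * (\<Sum>t<T. \<integral>p. l (snd p) (pred a a0 U t (fst p)) \<partial>(D t))
            - (1 / real T) * (\<Sum>t<T. (1 / real mm) * (\<Sum>i<mm. l (snd (z (t,i))) (pred a a0 U t (fst (z (t,i))))))
            \<le> 2 * c * r / sqrt (\<gamma> * real mm) + 2 * c * r / sqrt (\<beta> * real mm * real T)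
              + 3 * B * sqrt (ln (2 / \<delta>) / (2 * real mm * real T)))"
    proof (cases "\<delta> < 1")
      case False
      then show ?thesis by (intro bexI[where x="{}"]) auto
    next
      case True
      obtain E where Es: "E \<in> sets ?SM" and Em: "measure ?SM E \<ge> 1 - \<delta>"
        and Eb: "\<And>z a a0 U. z \<in> E \<Longrightarrow> optimal l T m \<gamma> \<beta> z a a0 U \<Longrightarrow>
          (\<integral>z'. emp_loss l T m z' a a0 U \<partial>?SM) - emp_loss l T m z a a0 U
          \<le> 2 * c * (sqrt (real T / \<gamma>) + sqrt (1 / \<beta>)) * sqrt (\<Sum>ti\<in>?I. (norm (fst (z ti)))\<^sup>2)
            + 3 * B * sqrt ((\<Sum>t<T. real (m t)) * ln (2 / \<delta>) / 2)"
        using core[OF T_pos m_pos gamma beta delta True D_prob D_sets l_meas l_bounded l_adm] by blast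
      let ?N = "\<lambda>ti::nat \<times> nat. D (fst ti)"
      have Np: "\<And>ti. ti \<in> ?I \<Longrightarrow> prob_space (?N ti)" using D_prob by (auto simp: sample_idx_def)
      interpret S: prob_space ?SM unfolding sample_measure_def by (rule prob_space_PiM[OF Np])
      define G where "G = {z \<in> space ?SM. \<forall>ti\<in>?I. norm (fst (z ti)) \<le> r}"
      have nf: "(\<lambda>p::(real^'d) \<times> real. norm (fst p)) \<in> borel_measurable borel"
        by (intro borel_measurable_continuous_onI continuous_intros)
      have Gs: "G \<in> sets ?SM"
        unfolding G_def
      proof (rule sets.sets_Collect_finite_All[OF _ finite_sidx])
        fix ti assume ti: "ti \<in> ?I"
        have "fst ti < T" using ti by (auto simp: sample_idx_def)
        have "(\<lambda>p::(real^'d) \<times> real. norm (fst p)) \<in> borel_measurable (D (fst ti))"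
          using nf by (subst measurable_cong_sets[OF D_sets[rule_format, OF \<open>fst ti < T\<close>] refl])
        from measurable_comp[OF measurable_component_singleton[OF ti, of ?N] this]
        have "(\<lambda>z. norm (fst (z ti))) \<in> borel_measurable ?SM"
          unfolding sample_measure_def by (simp add: comp_def)
        then show "{z \<in> space ?SM. norm (fst (z ti)) \<le> r} \<in> sets ?SM" by measurable
      qed
      have GAE: "AE z in ?SM. z \<in> G"
      proof -
        have "AE z in ?SM. \<forall>ti\<in>?I. norm (fst (z ti)) \<le> r"
        proof (rule AE_finite_allI[OF finite_sidx])
          fix ti assume ti: "ti \<in> ?I"
          have "fst ti < T" using ti by (auto simp: sample_idx_def)
          show "AE z in ?SM. norm (fst (z ti)) \<le> r"
            unfolding sample_measure_def
            by (rule AE_PiM_component[OF Np ti, where P="\<lambda>p. norm (fst p) \<le> r"]) (use AEr[OF \<open>fst ti < T\<close>] in auto)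
        qed
        then show ?thesis using AE_space unfolding G_def by eventually_elim auto
      qed
      have EGm: "measure ?SM (E \<inter> G) = measure ?SM E"
        by (rule measure_eq_AE) (use GAE Es Gs in auto)
      show ?thesis
      proof (rule bexI[where x="E \<inter> G"], intro conjI ballI allI impI)
        show "E \<inter> G \<in> sets ?SM" using Es Gs by auto
        show "1 - \<delta> \<le> measure ?SM (E \<inter> G)" using Em EGm by simp
        fix z :: "nat \<times> nat \<Rightarrow> (real^'d) \<times> real" and a a0 U
        assume z: "z \<in> E \<inter> G" and opt: "optimal l T m \<gamma> \<beta> z a a0 U"
        have zG: "\<forall>ti\<in>?I. norm (fst (z ti)) \<le> r" using z by (simp add: G_def)
        have r0: "r \<ge> 0"
        proof -
          have "(0,0) \<in> ?I" using T_pos mm1 mm[of 0] by (auto simp: sample_idx_def)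
          then show ?thesis using zG norm_ge_zero order_trans by blast
        qed
        have Nsum: "(\<Sum>t<T. real (m t)) = real mm * real T" using mm by simp
        have cardI: "real (card ?I) = real mm * real T"
          unfolding sidx_Sigma using mm by (simp add: card_SigmaI)
        have S0: "0 \<le> (\<Sum>ti\<in>?I. (norm (fst (z ti)))\<^sup>2)" by (simp add: sum_nonneg)
        have SN: "(\<Sum>ti\<in>?I. (norm (fst (z ti)))\<^sup>2) \<le> real mm * real T * r\<^sup>2"
        proof -
          have "(\<Sum>ti\<in>?I. (norm (fst (z ti)))\<^sup>2) \<le> (\<Sum>ti\<in>?I. r\<^sup>2)"
            using zG by (intro sum_mono power_mono) auto
          then show ?thesis using cardI by simp
        qed
        have Lp: "ln (2 / \<delta>) > 0" using delta True by simp
        have B0: "B \<ge> 0" using l_bounded order_trans by blast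
        have c0: "c \<ge> 0" using adm_lip(1)[OF l_adm] .
        have D1: "(\<integral>z'. emp_loss l T m z' a a0 U \<partial>?SM) - emp_loss l T m z a a0 U
          \<le> 2 * c * (sqrt (real T / \<gamma>) + sqrt (1 / \<beta>)) * sqrt (\<Sum>ti\<in>?I. (norm (fst (z ti)))\<^sup>2)
            + 3 * B * sqrt (real mm * real T * ln (2 / \<delta>) / 2)"
          using Eb[OF _ opt] z Nsum by simp
        define A where "A = (\<Sum>t<T. \<integral>p. l (snd p) (pred a a0 U t (fst p)) \<partial>(D t))"
        define Bs where "Bs = (\<Sum>t<T. \<Sum>i<mm. l (snd (z (t,i))) (pred a a0 U t (fst (z (t,i)))))"
        have IE: "(\<integral>z'. emp_loss l T m z' a a0 U \<partial>?SM) = real mm * A"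
          unfolding int_emp[OF D_prob D_sets l_meas l_bounded] A_def
          by (simp add: mm sum_distrib_left)
        have EZ: "emp_loss l T m z a a0 U = Bs"
          unfolding emp_loss_def Bs_def by (intro sum.cong refl) (simp add: mm)
        have "(1 / real T) * A - (1 / real T) * (\<Sum>t<T. (1 / real mm) * (\<Sum>i<mm. l (snd (z (t,i))) (pred a a0 U t (fst (z (t,i))))))
            = (real mm * A - Bs) / (real T * real mm)"
          using mm1 T_pos unfolding Bs_def by (simp add: field_simps sum_distrib_left sum_divide_distrib)
        also have "\<dots> \<le> 2 * c * r / sqrt (\<gamma> * real mm) + 2 * c * r / sqrt (\<beta> * real mm * real T)
              + 3 * B * sqrt (ln (2 / \<delta>) / (2 * real mm * real T))"
          by (rule final_arith[OF T_pos mm1 gamma beta c0 B0 r0 Lp S0 SN]) (use D1 IE EZ in simp)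
        finally show "(1 / real T) * (\<Sum>t<T. \<integral>p. l (snd p) (pred a a0 U t (fst p)) \<partial>(D t))
            - (1 / real T) * (\<Sum>t<T. (1 / real mm) * (\<Sum>i<mm. l (snd (z (t,i))) (pred a a0 U t (fst (z (t,i))))))
            \<le> 2 * c * r / sqrt (\<gamma> * real mm) + 2 * c * r / sqrt (\<beta> * real mm * real T)
              + 3 * B * sqrt (ln (2 / \<delta>) / (2 * real mm * real T))"
          unfolding A_def .
      qed
    qed
  qed
  show ?thesis using P1 P2 by blast
qed

end
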